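(* Consider the setting and certainty-equivalent controller described in the context. Then the loss function $$\Psi(\pi)=\mathbb{E}\Big[\sum_{k=0}^N \theta\delta_k+\|e_k\|^2_{\Gamma_k}\Big],$$ with $\theta=\ell(1-\lambda)/\lambda$, $e_k=x_k-\hat{x}_k$ and $\Gamma_k=A^TS_{k+1}B(B^TS_{k+1}B+R)^{-1}B^TS_{k+1}A$, is equivalent to the loss function $$\Phi(\pi)=\mathbb{E}\Big[\frac{1-\lambda}{N+1}\sum_{k=0}^N\ell\delta_k+\frac{\lambda}{N+1}\sum_{k=0}^N\big(\|x_{k+1}\|^2_Q+\|u_k\|^2_R\big)\Big],$$ in the sense that minimizing $\Psi$ over admissible triggering policies $\pi\in\mathcal{P}$ is equivalent to minimizing $\Phi$ over $\mathcal{P}$.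
   Context: Let $n,m\ge 1$, $N\in\mathbb{N}$, $\mathcal{K}=\{0,1,\dots,N\}$. A process evolves as $x_{k+1}=Ax_k+Bu_k+w_k$ with output $y_k=x_{k-\tau_k}$, where $A\in\mathbb{R}^{n\times n}$, $B\in\mathbb{R}^{n\times m}$, $w_k$ is Gaussian white noise with zero mean and covariance $W\succ0$, $x_0$ is Gaussian with mean $m_0$ and covariance $M_0$, $\tau_k\in\mathbb{N}_0$ are random delays with known distribution and $\tau_0=0$, all mutually independent. An event trigger chooses $\delta_k\in\{0,1\}$ (transmission to the controller, received at time $k+1$). Ages of information: at the event trigger $\zeta_0=0$, $\zeta_k=\tau_k$ if $\tau_k<\zeta_{k-1}+1$ and $\zeta_k=\zeta_{k-1}+1$ otherwise; at the controller $\eta_0=\infty$, $\eta_k=\zeta_{k-1}+1$ if $\delta_{k-1}=1$ and $\eta_k=\eta_{k-1}+1$ otherwise. The event trigger's information set is $\mathcal{I}^e_k=\{x_{t-\zeta_t},x_{t-\eta_t},\delta_s,u_s : 0\le t\le k,\ 0\le s<k\}$ (infinite-age entries void); $\mathcal{P}$ is the set of admissible triggering policies $\pi=\{\mathbb{P}(\delta_k\mid\mathcal{I}^e_k)\}_{k=0}^N$ (Borel measurable transition kernels). Let $\lambda\in(0,1)$, $\ell$ a weighting coefficient, $Q\succeq0$, $R\succ0$, $\|z\|^2_M=z^TMz$, $S_{N+1}=Q$, $S_k=Q+A^TS_{k+1}A-A^TS_{k+1}B(B^TS_{k+1}B+R)^{-1}B^TS_{k+1}A$ for $k\in\mathcal{K}$,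 $L_k=(B^TS_{k+1}B+R)^{-1}B^TS_{k+1}A$. The controller applies $u_k=-L_k\hat{x}_k$, where $\hat{x}_0=m_0$ and $\hat{x}_{k+1}=A^{\zeta_k+1}x_{k-\zeta_k}+\sum_{t=0}^{\zeta_k}A^tBu_{k-t}$ if $\delta_k=1$, and $\hat{x}_{k+1}=A\hat{x}_k+Bu_k$ if $\delta_k=0$. *)

theory Defs
  imports "HOL-Probability.Probability"
begin

definition qf :: "real^'n^'n \<Rightarrow> real^'n \<Rightarrow> real" where
  "qf P z = z \<bullet> (P *v z)"

definition mpow :: "real^'n^'n \<Rightarrow> nat \<Rightarrow> real^'n^'n" where
  "mpow A t = (((**) A) ^^ t) (mat 1)"

text \<open>Riccati recursion: S_{N+1} = Q, S_k = ric_step S_{k+1}.\<close>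
definition ric_step :: "real^'n^'n \<Rightarrow> real^'m^'n \<Rightarrow> real^'n^'n \<Rightarrow> real^'m^'m \<Rightarrow> real^'n^'n \<Rightarrow> real^'n^'n" where
  "ric_step A B Q R S = Q + transpose A ** S ** A
     - transpose A ** S ** B ** matrix_inv (transpose B ** S ** B + R) ** transpose B ** S ** A"

primrec ric_back :: "real^'n^'n \<Rightarrow> real^'m^'n \<Rightarrow> real^'n^'n \<Rightarrow> real^'m^'m \<Rightarrow> nat \<Rightarrow> real^'n^'n" where
  "ric_back A B Q R 0 = Q"
| "ric_back A B Q R (Suc j) = ric_step A B Q R (ric_back A B Q R j)"

definition riccS :: "real^'n^'n \<Rightarrow> real^'m^'n \<Rightarrow> real^'n^'n \<Rightarrow> real^'m^'m \<Rightarrow> nat \<Rightarrow> nat \<Rightarrow> real^'n^'n" where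
  "riccS A B Q R N k = ric_back A B Q R (N + 1 - k)"

definition gainL :: "real^'n^'n \<Rightarrow> real^'m^'n \<Rightarrow> real^'n^'n \<Rightarrow> real^'m^'m \<Rightarrow> nat \<Rightarrow> nat \<Rightarrow> real^'n^'m" where
  "gainL A B Q R N k = (let S = riccS A B Q R N (Suc k) in
     matrix_inv (transpose B ** S ** B + R) ** transpose B ** S ** A)"

definition Gam :: "real^'n^'n \<Rightarrow> real^'m^'n \<Rightarrow> real^'n^'n \<Rightarrow> real^'m^'m \<Rightarrow> nat \<Rightarrow> nat \<Rightarrow> real^'n^'n" where
  "Gam A B Q R N k = (let S = riccS A B Q R N (Suc k) in
     transpose A ** S ** B ** matrix_inv (transpose B ** S ** B + R) ** transpose B ** S ** A)"

text \<open>Age of information at the event trigger (depends only on the delays).\<close>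
fun zeta :: "(nat \<Rightarrow> nat) \<Rightarrow> nat \<Rightarrow> nat" where
  "zeta tau 0 = 0"
| "zeta tau (Suc k) = (if tau (Suc k) < zeta tau k + 1 then tau (Suc k) else zeta tau k + 1)"

text \<open>History of the closed loop: states, estimates, inputs, triggering decisions, controller ages.\<close>
record ('n::finite, 'm::finite) hist =
  hx :: "nat \<Rightarrow> real^'n"
  hxh :: "nat \<Rightarrow> real^'n"
  hu :: "nat \<Rightarrow> real^'m"
  hd :: "nat \<Rightarrow> bool"
  heta :: "nat \<Rightarrow> enat"

type_synonym ('n, 'm) infoval = "((nat \<times> (real^'n)) \<times> (enat \<times> (real^'n))) \<times> (bool \<times> (real^'m))"

text \<open>Measurable space of the information set of the event trigger (entries indexed by time,
  padded with default values outside the time range available at time k).\<close>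
definition info_space :: "(nat \<Rightarrow> ('n::finite, 'm::finite) infoval) measure" where
  "info_space = PiM UNIV (\<lambda>_.
     (((count_space UNIV) \<Otimes>\<^sub>M (borel :: (real^'n) measure)) \<Otimes>\<^sub>M ((count_space UNIV) \<Otimes>\<^sub>M (borel :: (real^'n) measure)))
      \<Otimes>\<^sub>M ((count_space UNIV) \<Otimes>\<^sub>M (borel :: (real^'m) measure)))"

text \<open>Information set I^e_k: (zeta_t, x_{t - zeta_t}) and (eta_t, x_{t - eta_t}) for t \<le> k
  (value 0 when eta_t = \<infinity>), delta_s and u_s for s < k.\<close>
definition info_of :: "(nat \<Rightarrow> nat) \<Rightarrow> ('n::finite, 'm::finite) hist \<Rightarrow> nat \<Rightarrow> nat \<Rightarrow> ('n, 'm) infoval" where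
  "info_of tau h k i =
    ((if i \<le> k then (zeta tau i, hx h (i - zeta tau i)) else (0, 0),
      if i \<le> k then (heta h i, if heta h i = \<infinity> then 0 else hx h (i - the_enat (heta h i))) else (0, 0)),
     (if i < k then hd h i else False, if i < k then hu h i else 0))"

text \<open>One step of the closed loop at time k. The randomised triggering decision is realised as
  delta_k = (v_k < p k I_k) with v_k uniform on [0,1], so that P(delta_k = 1 | I_k) = p k I_k.\<close>
definition sys_step :: "real^'n^'n \<Rightarrow> real^'m^'n \<Rightarrow> (nat \<Rightarrow> real^'n^'m) \<Rightarrow> (nat \<Rightarrow> real^'n)
   \<Rightarrow> (nat \<Rightarrow> nat) \<Rightarrow> (nat \<Rightarrow> real) \<Rightarrow> (nat \<Rightarrow> (nat \<Rightarrow> ('n::finite, 'm::finite) infoval) \<Rightarrow> real)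
   \<Rightarrow> ('n, 'm) hist \<Rightarrow> nat \<Rightarrow> ('n, 'm) hist" where
  "sys_step A B L w tau v p h k =
    (let u = - (L k *v hxh h k);
         us = (hu h)(k := u);
         d = (v k < p k (info_of tau h k));
         z = zeta tau k;
         xn = A *v hx h k + B *v u + w k;
         xhn = (if d then mpow A (z + 1) *v hx h (k - z) + (\<Sum>t\<le>z. mpow A t *v (B *v us (k - t)))
                else A *v hxh h k + B *v u);
         en = (if d then enat (z + 1) else heta h k + 1)
     in h\<lparr>hx := (hx h)(Suc k := xn), hxh := (hxh h)(Suc k := xhn), hu := us,
          hd := (hd h)(k := d), heta := (heta h)(Suc k := en)\<rparr>)"

definition hist_init :: "real^'n \<Rightarrow> real^'n \<Rightarrow> ('n::finite, 'm::finite) hist" where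
  "hist_init m0 x0 = \<lparr>hx = (\<lambda>_. 0)(0 := x0), hxh = (\<lambda>_. 0)(0 := m0), hu = (\<lambda>_. 0),
                      hd = (\<lambda>_. False), heta = (\<lambda>_. 0)(0 := \<infinity>)\<rparr>"

primrec run :: "real^'n^'n \<Rightarrow> real^'m^'n \<Rightarrow> (nat \<Rightarrow> real^'n^'m) \<Rightarrow> real^'n \<Rightarrow> real^'n \<Rightarrow> (nat \<Rightarrow> real^'n)
   \<Rightarrow> (nat \<Rightarrow> nat) \<Rightarrow> (nat \<Rightarrow> real) \<Rightarrow> (nat \<Rightarrow> (nat \<Rightarrow> ('n::finite, 'm::finite) infoval) \<Rightarrow> real)
   \<Rightarrow> nat \<Rightarrow> ('n, 'm) hist" where
  "run A B L m0 x0 w tau v p 0 = hist_init m0 x0"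
| "run A B L m0 x0 w tau v p (Suc k) = sys_step A B L w tau v p (run A B L m0 x0 w tau v p k) k"

definition traj :: "real^'n^'n \<Rightarrow> real^'m^'n \<Rightarrow> real^'n^'n \<Rightarrow> real^'m^'m \<Rightarrow> nat \<Rightarrow> real^'n
   \<Rightarrow> ('w \<Rightarrow> real^'n) \<Rightarrow> (nat \<Rightarrow> 'w \<Rightarrow> real^'n) \<Rightarrow> (nat \<Rightarrow> 'w \<Rightarrow> nat) \<Rightarrow> (nat \<Rightarrow> 'w \<Rightarrow> real)
   \<Rightarrow> (nat \<Rightarrow> (nat \<Rightarrow> ('n::finite, 'm::finite) infoval) \<Rightarrow> real) \<Rightarrow> 'w \<Rightarrow> ('n, 'm) hist" where
  "traj A B Q R N m0 X0 Wn Tau V p \<omega> =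
     run A B (gainL A B Q R N) m0 (X0 \<omega>) (\<lambda>k. Wn k \<omega>) (\<lambda>k. Tau k \<omega>) (\<lambda>k. V k \<omega>) p (Suc N)"

text \<open>Admissible (randomised, Borel measurable) triggering policies: p k I = P(delta_k = 1 | I^e_k = I).\<close>
definition admissible :: "nat \<Rightarrow> (nat \<Rightarrow> (nat \<Rightarrow> ('n::finite, 'm::finite) infoval) \<Rightarrow> real) set" where
  "admissible N = {p. \<forall>k\<le>N. p k \<in> borel_measurable info_space \<and> (\<forall>I. 0 \<le> p k I \<and> p k I \<le> 1)}"

text \<open>Gaussian random vector with mean mu and covariance C (all one-dimensional projections normal).\<close>
definition gaussian_vec :: "'a measure \<Rightarrow> ('a \<Rightarrow> real^'n) \<Rightarrow> real^'n \<Rightarrow> real^'n^'n \<Rightarrow> bool" where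
  "gaussian_vec M X mu C \<longleftrightarrow> X \<in> borel_measurable M \<and>
     (\<forall>c. (0 < qf C c \<longrightarrow> distributed M lborel (\<lambda>\<omega>. c \<bullet> X \<omega>)
                                  (\<lambda>x. ennreal (normal_density (c \<bullet> mu) (sqrt (qf C c)) x)))
        \<and> (qf C c = 0 \<longrightarrow> (AE \<omega> in M. c \<bullet> X \<omega> = c \<bullet> mu)))"

datatype src = SX0 | SW nat | STau nat | SV nat

definition rv_events :: "'a measure \<Rightarrow> 'b measure \<Rightarrow> ('a \<Rightarrow> 'b) \<Rightarrow> 'a set set" where
  "rv_events M N X = {X -` A \<inter> space M | A. A \<in> sets N}"

definition src_events :: "'a measure \<Rightarrow> ('a \<Rightarrow> real^'n) \<Rightarrow> (nat \<Rightarrow> 'a \<Rightarrow> real^'n) \<Rightarrow> (nat \<Rightarrow> 'a \<Rightarrow> nat)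
    \<Rightarrow> (nat \<Rightarrow> 'a \<Rightarrow> real) \<Rightarrow> src \<Rightarrow> 'a set set" where
  "src_events M X0 Wn Tau V i = (case i of
      SX0 \<Rightarrow> rv_events M borel X0
    | SW k \<Rightarrow> rv_events M borel (Wn k)
    | STau k \<Rightarrow> rv_events M (count_space UNIV) (Tau k)
    | SV k \<Rightarrow> rv_events M borel (V k))"

definition Psi :: "'w measure \<Rightarrow> real^'n^'n \<Rightarrow> real^'m^'n \<Rightarrow> real^'n^'n \<Rightarrow> real^'m^'m \<Rightarrow> nat \<Rightarrow> real \<Rightarrow> real
   \<Rightarrow> real^'n \<Rightarrow> ('w \<Rightarrow> real^'n) \<Rightarrow> (nat \<Rightarrow> 'w \<Rightarrow> real^'n) \<Rightarrow> (nat \<Rightarrow> 'w \<Rightarrow> nat) \<Rightarrow> (nat \<Rightarrow> 'w \<Rightarrow> real)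
   \<Rightarrow> (nat \<Rightarrow> (nat \<Rightarrow> ('n::finite, 'm::finite) infoval) \<Rightarrow> real) \<Rightarrow> real" where
  "Psi M A B Q R N lam ell m0 X0 Wn Tau V p =
     (let \<theta> = ell * (1 - lam) / lam in
      \<integral>\<omega>. (let h = traj A B Q R N m0 X0 Wn Tau V p \<omega> in
             \<Sum>k\<le>N. \<theta> * of_bool (hd h k) + qf (Gam A B Q R N k) (hx h k - hxh h k)) \<partial>M)"

definition Phi :: "'w measure \<Rightarrow> real^'n^'n \<Rightarrow> real^'m^'n \<Rightarrow> real^'n^'n \<Rightarrow> real^'m^'m \<Rightarrow> nat \<Rightarrow> real \<Rightarrow> real
   \<Rightarrow> real^'n \<Rightarrow> ('w \<Rightarrow> real^'n) \<Rightarrow> (nat \<Rightarrow> 'w \<Rightarrow> real^'n) \<Rightarrow> (nat \<Rightarrow> 'w \<Rightarrow> nat) \<Rightarrow> (nat \<Rightarrow> 'w \<Rightarrow> real)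
   \<Rightarrow> (nat \<Rightarrow> (nat \<Rightarrow> ('n::finite, 'm::finite) infoval) \<Rightarrow> real) \<Rightarrow> real" where
  "Phi M A B Q R N lam ell m0 X0 Wn Tau V p =
      (\<integral>\<omega>. (let h = traj A B Q R N m0 X0 Wn Tau V p \<omega> in
             (1 - lam) / real (N + 1) * (\<Sum>k\<le>N. ell * of_bool (hd h k))
           + lam / real (N + 1) * (\<Sum>k\<le>N. qf Q (hx h (Suc k)) + qf R (hu h k))) \<partial>M)"

end

theory Submission
  imports Defs
begin


declare transpose_matrix_vector[simp del] vector_transpose_matrix[simp del]

lemma qf_add: "qf (P + P') z = qf P z + qf P' z"
  by (simp add: qf_def matrix_vector_mult_add_rdistrib inner_add_right)
lemma qf_diff: "qf (P - P') z = qf P z - qf P' z"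
  by (simp add: qf_def matrix_vector_mult_diff_rdistrib inner_diff_right)

lemma transpose_add: "transpose (X + Y) = transpose X + transpose (Y::real^'n^'m)"
  by (simp add: transpose_def vec_eq_iff)
lemma transpose_diff: "transpose (X - Y) = transpose X - transpose (Y::real^'n^'m)"
  by (simp add: transpose_def vec_eq_iff)

lemma dot_transpose: "(a::real^'m) \<bullet> ((M::real^'n^'m) *v b) = (transpose M *v a) \<bullet> b"
  by (simp add: dot_lmul_matrix transpose_matrix_vector)

lemma sym_dot: "transpose (S::real^'n^'n) = S \<Longrightarrow> a \<bullet> (S *v b) = b \<bullet> (S *v a)"
  by (metis dot_transpose inner_commute)

lemma completion:
  fixes A :: "real^'n^'n" and B :: "real^'m^'n" and S :: "real^'n^'n" and R :: "real^'m^'m"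
  assumes S: "transpose S = S" and R: "transpose R = R"
    and PG: "(transpose B ** S ** B + R) ** G = mat 1"
  shows "qf S (A *v x + B *v u) + qf R u =
     qf (transpose A ** S ** A) x - qf (transpose A ** S ** B ** G ** transpose B ** S ** A) x
     + qf (transpose B ** S ** B + R) (u + (G ** transpose B ** S ** A) *v x)"
proof -
  define P where "P = transpose B ** S ** B + R"
  define y where "y = transpose B *v (S *v (A *v x))"
  have Psym: "transpose P = P" unfolding P_def using S R
    by (simp add: matrix_transpose_mul matrix_mul_assoc transpose_add)
  have PGy: "P *v (G *v y) = y" using PG unfolding P_def[symmetric]
    by (simp add: matrix_vector_mul_assoc matrix_mul_assoc)
  have Lx: "(G ** transpose B ** S ** A) *v x = G *v y"
    by (simp add: y_def matrix_vector_mul_assoc matrix_mul_assoc)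
  have Gam: "qf (transpose A ** S ** B ** G ** transpose B ** S ** A) x = y \<bullet> (G *v y)"
  proof -
    have "qf (transpose A ** S ** B ** G ** transpose B ** S ** A) x
       = x \<bullet> (transpose A *v (S *v (B *v (G *v y))))"
      by (simp add: qf_def y_def matrix_vector_mul_assoc matrix_mul_assoc)
    also have "\<dots> = (A *v x) \<bullet> (S *v (B *v (G *v y)))"
      by (metis dot_transpose transpose_transpose)
    also have "\<dots> = (B *v (G *v y)) \<bullet> (S *v (A *v x))" using sym_dot[OF S] by blast
    also have "\<dots> = (G *v y) \<bullet> y" by (metis dot_transpose inner_commute y_def)
    finally show ?thesis by (simp add: inner_commute)
  qed
  have AtSA: "qf (transpose A ** S ** A) x = (A *v x) \<bullet> (S *v (A *v x))"
  proof -
    have "qf (transpose A ** S ** A) x = x \<bullet> (transpose A *v (S *v (A *v x)))"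
      by (simp add: qf_def matrix_vector_mul_assoc matrix_mul_assoc)
    then show ?thesis by (metis dot_transpose transpose_transpose)
  qed
  have BSB: "qf P u = (B *v u) \<bullet> (S *v (B *v u)) + qf R u"
  proof -
    have "qf (transpose B ** S ** B) u = u \<bullet> (transpose B *v (S *v (B *v u)))"
      by (simp add: qf_def matrix_vector_mul_assoc matrix_mul_assoc)
    then show ?thesis unfolding P_def qf_add by (metis dot_transpose transpose_transpose)
  qed
  have cross: "(B *v u) \<bullet> (S *v (A *v x)) = u \<bullet> y"
    by (metis dot_transpose inner_commute y_def)
  have lhs: "qf S (A *v x + B *v u) = (A *v x) \<bullet> (S *v (A *v x)) + 2 * (u \<bullet> y) + (B *v u) \<bullet> (S *v (B *v u))"
    using sym_dot[OF S, of "A *v x" "B *v u"] cross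
    by (simp add: qf_def matrix_vector_right_distrib inner_add_left inner_add_right)
  have rhs: "qf P (u + G *v y) = qf P u + 2 * (u \<bullet> y) + y \<bullet> (G *v y)"
  proof -
    have "qf P (u + G *v y) = u \<bullet> (P *v u) + u \<bullet> (P *v (G *v y)) + (G *v y) \<bullet> (P *v u) + (G *v y) \<bullet> (P *v (G *v y))"
      by (simp add: qf_def matrix_vector_right_distrib inner_add_left inner_add_right)
    also have "(G *v y) \<bullet> (P *v u) = u \<bullet> (P *v (G *v y))" using sym_dot[OF Psym] by blast
    finally show ?thesis by (simp add: PGy qf_def inner_commute)
  qed
  show ?thesis
    unfolding P_def[symmetric] Lx rhs Gam AtSA BSB lhs by simp
qed

lemma matrix_inv_both:
  fixes P :: "real^'m^'m"
  assumes "invertible P"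
  shows "P ** matrix_inv P = mat 1 \<and> matrix_inv P ** P = mat 1"
  using assms unfolding matrix_inv_def invertible_def by (rule someI_ex)

lemma P_invertible:
  fixes B :: "real^'m^'n" and S :: "real^'n^'n" and R :: "real^'m^'m"
  assumes S: "\<forall>z. 0 \<le> qf S z" and R: "\<forall>z. z \<noteq> 0 \<longrightarrow> 0 < qf R z"
  shows "invertible (transpose B ** S ** B + R)"
proof -
  have "\<forall>z. (transpose B ** S ** B + R) *v z = 0 \<longrightarrow> z = 0"
  proof (intro allI impI)
    fix z assume z: "(transpose B ** S ** B + R) *v z = 0"
    have "qf (transpose B ** S ** B) z = qf S (B *v z)"
    proof -
      have "qf (transpose B ** S ** B) z = z \<bullet> (transpose B *v (S *v (B *v z)))"
        by (simp add: qf_def matrix_vector_mul_assoc matrix_mul_assoc)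
      then show ?thesis unfolding qf_def by (metis dot_transpose transpose_transpose)
    qed
    moreover have "qf (transpose B ** S ** B + R) z = 0" using z by (simp add: qf_def)
    ultimately have "qf S (B *v z) + qf R z = 0" by (simp add: qf_add)
    with S have "qf R z \<le> 0" by (metis le_add_same_cancel2)
    with R show "z = 0" by (meson not_le)
  qed
  then have "\<exists>G. G ** (transpose B ** S ** B + R) = mat 1"
    using matrix_left_invertible_ker by blast
  then show ?thesis using invertible_left_inverse by blast
qed

lemma inv_sym:
  fixes P :: "real^'m^'m"
  assumes "invertible P" "transpose P = P"
  shows "transpose (matrix_inv P) = matrix_inv P"
proof -
  let ?G = "matrix_inv P"
  have 1: "P ** ?G = mat 1" "?G ** P = mat 1" using matrix_inv_both[OF assms(1)] by auto
  have "transpose ?G ** P = mat 1"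
    using arg_cong[OF 1(1), of transpose] assms(2) by (simp add: matrix_transpose_mul)
  then have "transpose ?G = transpose ?G ** (P ** ?G)" using 1 by simp
  also have "\<dots> = (transpose ?G ** P) ** ?G" by (simp add: matrix_mul_assoc)
  also have "\<dots> = ?G" using \<open>transpose ?G ** P = mat 1\<close> by simp
  finally show ?thesis .
qed

lemma ric_step_good:
  fixes A :: "real^'n^'n" and B :: "real^'m^'n" and S Q :: "real^'n^'n" and R :: "real^'m^'m"
  assumes Q: "transpose Q = Q" "\<forall>z. 0 \<le> qf Q z"
    and R: "transpose R = R" "\<forall>z. z \<noteq> 0 \<longrightarrow> 0 < qf R z"
    and S: "transpose S = S" "\<forall>z. 0 \<le> qf S z"
  shows "transpose (ric_step A B Q R S) = ric_step A B Q R S \<and> (\<forall>z. 0 \<le> qf (ric_step A B Q R S) z)"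
proof -
  define P where "P = transpose B ** S ** B + R"
  define G where "G = matrix_inv P"
  have inv: "invertible P" unfolding P_def using P_invertible S(2) R(2) by blast
  have Psym: "transpose P = P" unfolding P_def using S R
    by (simp add: matrix_transpose_mul matrix_mul_assoc transpose_add)
  have Gsym: "transpose G = G" unfolding G_def using inv_sym[OF inv Psym] .
  have PG: "P ** G = mat 1" using matrix_inv_both[OF inv] G_def by simp
  have sym: "transpose (ric_step A B Q R S) = ric_step A B Q R S"
    unfolding ric_step_def P_def[symmetric] G_def[symmetric]
    using Q(1) S(1) Gsym by (simp add: transpose_add transpose_diff matrix_transpose_mul matrix_mul_assoc)
  have Rnn: "\<forall>z. 0 \<le> qf R z" using R(2) by (metis less_eq_real_def qf_def inner_zero_left)
  have "0 \<le> qf (ric_step A B Q R S) z" for z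
  proof -
    define u where "u = - ((G ** transpose B ** S ** A) *v z)"
    have "qf S (A *v z + B *v u) + qf R u =
     qf (transpose A ** S ** A) z - qf (transpose A ** S ** B ** G ** transpose B ** S ** A) z
     + qf P (u + (G ** transpose B ** S ** A) *v z)"
      using completion[OF S(1) R(1) PG[unfolded P_def]] P_def by blast
    also have "qf P (u + (G ** transpose B ** S ** A) *v z) = 0" by (simp add: u_def qf_def)
    finally have "qf (transpose A ** S ** A) z - qf (transpose A ** S ** B ** G ** transpose B ** S ** A) z \<ge> 0"
      using S(2) Rnn by (metis add.right_neutral add_nonneg_nonneg)
    then show ?thesis using Q(2)[rule_format, of z]
      unfolding ric_step_def G_def[symmetric] P_def[symmetric] qf_add qf_diff by linarith
  qed
  then show ?thesis using sym by blast
qed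

lemma ric_back_good:
  fixes A :: "real^'n^'n" and B :: "real^'m^'n" and Q :: "real^'n^'n" and R :: "real^'m^'m"
  assumes Q: "transpose Q = Q" "\<forall>z. 0 \<le> qf Q z"
    and R: "transpose R = R" "\<forall>z. z \<noteq> 0 \<longrightarrow> 0 < qf R z"
  shows "transpose (ric_back A B Q R j) = ric_back A B Q R j \<and> (\<forall>z. 0 \<le> qf (ric_back A B Q R j) z)"
  by (induction j) (use Q in simp, use ric_step_good[OF Q R] in simp)

lemma qf_AtSA: "qf (transpose A ** S ** A) x = qf S (A *v x)"
proof -
  have "qf (transpose A ** S ** A) x = x \<bullet> (transpose A *v (S *v (A *v x)))"
    by (simp add: qf_def matrix_vector_mul_assoc matrix_mul_assoc)
  then show ?thesis unfolding qf_def by (metis dot_transpose transpose_transpose)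
qed

lemma step_identity:
  fixes A :: "real^'n^'n" and B :: "real^'m^'n" and S Q :: "real^'n^'n" and R :: "real^'m^'m"
  assumes R: "transpose R = R" "\<forall>z. z \<noteq> 0 \<longrightarrow> 0 < qf R z"
    and S: "transpose S = S" "\<forall>z. 0 \<le> qf S z"
    and L: "L = matrix_inv (transpose B ** S ** B + R) ** transpose B ** S ** A"
    and Gm: "Gm = transpose A ** S ** B ** matrix_inv (transpose B ** S ** B + R) ** transpose B ** S ** A"
    and u: "u = - (L *v xh)"
    and x': "x' = A *v x + B *v u + w"
  shows "qf Q x' + qf R u = qf Q x' - qf S x' + qf (ric_step A B Q R S) x - qf Q x + qf Gm (x - xh)
           + 2 * (w \<bullet> (S *v (A *v x + B *v u))) + qf S w"
proof -
  define P where "P = transpose B ** S ** B + R"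
  define G where "G = matrix_inv P"
  have inv: "invertible P" unfolding P_def using P_invertible S(2) R(2) by blast
  have PG: "P ** G = mat 1" using matrix_inv_both[OF inv] G_def by simp
  note C = completion[OF S(1) R(1) PG[unfolded P_def]]
  have L': "L = G ** transpose B ** S ** A" using L P_def G_def by simp
  have Gm': "Gm = transpose A ** S ** B ** G ** transpose B ** S ** A" using Gm P_def G_def by simp
  have e: "u + L *v x = L *v (x - xh)" by (simp add: u matrix_vector_mult_diff_distrib)
  have C1: "qf S (A *v x + B *v u) + qf R u = qf (transpose A ** S ** A) x - qf Gm x + qf P (L *v (x - xh))"
    using C[of A x u] unfolding L'[symmetric] Gm'[symmetric] P_def[symmetric] e .
  have C2: "qf P (L *v (x - xh)) = qf Gm (x - xh)"
    using C[of A "x - xh" 0] unfolding L'[symmetric] Gm'[symmetric] P_def[symmetric] qf_AtSA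
    by (simp add: qf_def)
  have Sx: "qf (ric_step A B Q R S) x = qf Q x + qf (transpose A ** S ** A) x - qf Gm x"
    unfolding ric_step_def Gm' G_def P_def qf_add qf_diff by simp
  have x'e: "qf S x' = qf S (A *v x + B *v u) + 2 * (w \<bullet> (S *v (A *v x + B *v u))) + qf S w"
    unfolding x' qf_def using sym_dot[OF S(1), of w "A *v x + B *v u"]
    by (simp add: matrix_vector_right_distrib inner_add_left inner_add_right)
  show ?thesis using C1 C2 Sx x'e by linarith
qed


lemma sys_step_simps:
  "hx (sys_step A B L w tau v p h k) i = (if i = Suc k then A *v hx h k + B *v (- (L k *v hxh h k)) + w k else hx h i)"
  "hu (sys_step A B L w tau v p h k) i = (if i = k then - (L k *v hxh h k) else hu h i)"
  "hxh (sys_step A B L w tau v p h k) i = (if i = Suc k then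
      (if v k < p k (info_of tau h k) then mpow A (zeta tau k + 1) *v hx h (k - zeta tau k)
         + (\<Sum>t\<le>zeta tau k. mpow A t *v (B *v ((hu h)(k := - (L k *v hxh h k))) (k - t)))
       else A *v hxh h k + B *v (- (L k *v hxh h k))) else hxh h i)"
  "hd (sys_step A B L w tau v p h k) i = (if i = k then v k < p k (info_of tau h k) else hd h i)"
  "heta (sys_step A B L w tau v p h k) i = (if i = Suc k then
      (if v k < p k (info_of tau h k) then enat (zeta tau k + 1) else heta h k + 1) else heta h i)"
  by (simp_all add: sys_step_def Let_def)

lemma run_frozen:
  assumes "m \<le> n"
  shows "(\<forall>i\<le>m. hx (run A B L m0 x0 w tau v p n) i = hx (run A B L m0 x0 w tau v p m) i
              \<and> hxh (run A B L m0 x0 w tau v p n) i = hxh (run A B L m0 x0 w tau v p m) i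
              \<and> heta (run A B L m0 x0 w tau v p n) i = heta (run A B L m0 x0 w tau v p m) i)
       \<and> (\<forall>i<m. hu (run A B L m0 x0 w tau v p n) i = hu (run A B L m0 x0 w tau v p m) i
              \<and> hd (run A B L m0 x0 w tau v p n) i = hd (run A B L m0 x0 w tau v p m) i)"
  using assms
proof (induction n)
  case 0 then show ?case by simp
next
  case (Suc n)
  show ?case
  proof (cases "m = Suc n")
    case True then show ?thesis by simp
  next
    case False
    then have "m \<le> n" using Suc.prems by simp
    with Suc.IH show ?thesis by (auto simp: sys_step_simps)
  qed
qed

lemma run_rel:
  fixes A :: "real^'n^'n" and B :: "real^'m^'n"
  assumes "k \<le> N"
    and h_def: "h = run A B L m0 x0 w tau v p (Suc N)"
  shows "hx h 0 = x0"
    and "hu h k = - (L k *v hxh h k)"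
    and "hx h (Suc k) = A *v hx h k + B *v hu h k + w k"
proof -
  let ?r = "run A B L m0 x0 w tau v p"
  have f0: "hx h 0 = hx (?r 0) 0" unfolding h_def using run_frozen[of 0 "Suc N" A B L m0 x0 w tau v p] by auto
  then show "hx h 0 = x0" by (simp add: hist_init_def)
  have fk: "hx h k = hx (?r k) k" "hxh h k = hxh (?r k) k"
    unfolding h_def using run_frozen[of k "Suc N" A B L m0 x0 w tau v p] assms by auto
  have fk1: "hx h (Suc k) = hx (?r (Suc k)) (Suc k)" "hu h k = hu (?r (Suc k)) k"
    unfolding h_def using run_frozen[of "Suc k" "Suc N" A B L m0 x0 w tau v p] assms by auto
  show "hu h k = - (L k *v hxh h k)" using fk fk1 by (simp add: sys_step_simps)
  then show "hx h (Suc k) = A *v hx h k + B *v hu h k + w k" using fk fk1 by (simp add: sys_step_simps)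
qed

lemma riccS_step: "k \<le> N \<Longrightarrow> riccS A B Q R N k = ric_step A B Q R (riccS A B Q R N (Suc k))"
  unfolding riccS_def by (simp add: Suc_diff_le)

lemma riccS_last: "riccS A B Q R N (Suc N) = Q"
  unfolding riccS_def by simp

lemma path_identity:
  fixes A :: "real^'n^'n" and B :: "real^'m^'n" and Q :: "real^'n^'n" and R :: "real^'m^'m"
  assumes Q: "transpose Q = Q" "\<forall>z. 0 \<le> qf Q z"
    and R: "transpose R = R" "\<forall>z. z \<noteq> 0 \<longrightarrow> 0 < qf R z"
    and h_def: "h = run A B (gainL A B Q R N) m0 x0 w tau v p (Suc N)"
  shows "(\<Sum>k\<le>N. qf Q (hx h (Suc k)) + qf R (hu h k)) =
     qf (riccS A B Q R N 0) x0 - qf Q x0 +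
     (\<Sum>k\<le>N. qf (Gam A B Q R N k) (hx h k - hxh h k)
        + 2 * (w k \<bullet> (riccS A B Q R N (Suc k) *v (A *v hx h k + B *v hu h k)))
        + qf (riccS A B Q R N (Suc k)) (w k))"
proof -
  let ?S = "riccS A B Q R N"
  define f where "f k = qf (?S k) (hx h k) - qf Q (hx h k)" for k
  have step: "qf Q (hx h (Suc k)) + qf R (hu h k) = (f k - f (Suc k)) +
      (qf (Gam A B Q R N k) (hx h k - hxh h k)
        + 2 * (w k \<bullet> (?S (Suc k) *v (A *v hx h k + B *v hu h k)))
        + qf (?S (Suc k)) (w k))" if k: "k \<le> N" for k
  proof -
    have good: "transpose (?S (Suc k)) = ?S (Suc k) \<and> (\<forall>z. 0 \<le> qf (?S (Suc k)) z)"
      unfolding riccS_def using ric_back_good[OF Q R] by blast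
    have rel: "hu h k = - (gainL A B Q R N k *v hxh h k)" "hx h (Suc k) = A *v hx h k + B *v hu h k + w k"
      using run_rel[OF k h_def] by auto
    have "qf Q (hx h (Suc k)) + qf R (hu h k) = qf Q (hx h (Suc k)) - qf (?S (Suc k)) (hx h (Suc k))
       + qf (ric_step A B Q R (?S (Suc k))) (hx h k) - qf Q (hx h k) + qf (Gam A B Q R N k) (hx h k - hxh h k)
           + 2 * (w k \<bullet> (?S (Suc k) *v (A *v hx h k + B *v hu h k))) + qf (?S (Suc k)) (w k)"
      by (rule step_identity[OF R, of "?S (Suc k)"])
         (use good rel in \<open>simp_all add: gainL_def Gam_def Let_def\<close>)
    then show ?thesis unfolding f_def riccS_step[OF k, symmetric] by simp
  qed
  have "(\<Sum>k\<le>N. qf Q (hx h (Suc k)) + qf R (hu h k)) = (\<Sum>k\<le>N. (f k - f (Suc k)) +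
      (qf (Gam A B Q R N k) (hx h k - hxh h k)
        + 2 * (w k \<bullet> (?S (Suc k) *v (A *v hx h k + B *v hu h k)))
        + qf (?S (Suc k)) (w k)))"
    using step by (intro sum.cong) auto
  also have "\<dots> = (\<Sum>k\<le>N. f k - f (Suc k)) + (\<Sum>k\<le>N. qf (Gam A B Q R N k) (hx h k - hxh h k)
        + 2 * (w k \<bullet> (?S (Suc k) *v (A *v hx h k + B *v hu h k)))
        + qf (?S (Suc k)) (w k))"
    by (simp add: sum.distrib)
  also have "(\<Sum>k\<le>N. f k - f (Suc k)) = f 0 - f (Suc N)" by (rule sum_telescope)
  also have "f (Suc N) = 0" unfolding f_def riccS_last by simp
  also have "f 0 = qf (?S 0) x0 - qf Q x0" unfolding f_def using run_rel(1)[OF le0 h_def] by simp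
  finally show ?thesis by simp
qed


lemma zeta_le: "zeta tau k \<le> k"
  by (induction k) auto

lemma meas_count2:
  fixes f :: "'a \<Rightarrow> 'b::countable" and g :: "'a \<Rightarrow> 'c::countable"
  assumes f: "f \<in> measurable G (count_space UNIV)" and g: "g \<in> measurable G (count_space UNIV)"
  shows "(\<lambda>\<omega>. F (f \<omega>) (g \<omega>)) \<in> measurable G (count_space UNIV)"
proof -
  have "(\<lambda>\<omega>. F a (g \<omega>)) \<in> measurable G (count_space UNIV)" for a
    by (rule measurable_compose_countable[where g=g and f="\<lambda>b \<omega>. F a b", OF _ g]) simp
  then show ?thesis
    by (rule measurable_compose_countable[where g=f and f="\<lambda>a \<omega>. F a (g \<omega>)", OF _ f])
qed

lemma zeta_meas:
  assumes T: "\<And>j. Tau j \<in> measurable G (count_space UNIV)"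
  shows "(\<lambda>\<omega>. zeta (\<lambda>k. Tau k \<omega>) i) \<in> measurable G (count_space UNIV)"
proof (induction i)
  case 0 then show ?case by simp
next
  case (Suc i)
  show ?case using meas_count2[OF T[of "Suc i"] Suc.IH, where F="\<lambda>a b. if a < b + 1 then a else b + 1"] by simp
qed

lemma mv_meas[measurable (raw)]:
  fixes P :: "real^'n^'m"
  shows "f \<in> borel_measurable G \<Longrightarrow> (\<lambda>\<omega>. P *v f \<omega>) \<in> borel_measurable G"
  by (rule borel_measurable_continuous_on[OF linear_continuous_on[OF matrix_vector_mul_bounded_linear]])

lemma info_meas:
  fixes h :: "'w \<Rightarrow> ('n::finite, 'm::finite) hist"
  assumes T: "\<And>j. Tau j \<in> measurable G (count_space UNIV)"
    and hx: "\<And>i. (\<lambda>\<omega>. hx (h \<omega>) i) \<in> borel_measurable G"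
    and hu: "\<And>i. (\<lambda>\<omega>. hu (h \<omega>) i) \<in> borel_measurable G"
    and hd: "\<And>i. (\<lambda>\<omega>. hd (h \<omega>) i) \<in> measurable G (count_space UNIV)"
    and he: "\<And>i. (\<lambda>\<omega>. heta (h \<omega>) i) \<in> measurable G (count_space UNIV)"
  shows "(\<lambda>\<omega>. info_of (\<lambda>k. Tau k \<omega>) (h \<omega>) k) \<in> measurable G info_space"
proof -
  have z: "(\<lambda>\<omega>. zeta (\<lambda>k. Tau k \<omega>) i) \<in> measurable G (count_space UNIV)" for i
    using zeta_meas[OF T] .
  have a: "(\<lambda>\<omega>. hx (h \<omega>) (i - zeta (\<lambda>k. Tau k \<omega>) i)) \<in> borel_measurable G" for i
    by (rule measurable_compose_countable[where f="\<lambda>a \<omega>. hx (h \<omega>) (i - a)", OF hx z])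
  have b: "(\<lambda>\<omega>. if heta (h \<omega>) i = \<infinity> then 0 else hx (h \<omega>) (i - the_enat (heta (h \<omega>) i))) \<in> borel_measurable G" for i
  proof (rule measurable_compose_countable[where f="\<lambda>e \<omega>. if e = \<infinity> then 0 else hx (h \<omega>) (i - the_enat e)", OF _ he])
    fix e :: enat show "(\<lambda>\<omega>. if e = \<infinity> then 0 else hx (h \<omega>) (i - the_enat e)) \<in> borel_measurable G"
      by (cases "e = \<infinity>") (simp, simp only: if_False hx)
  qed
  show ?thesis
    unfolding info_space_def
    apply (rule measurable_PiM_single')
    subgoal for i
      unfolding info_of_def
      by (cases "i \<le> k"; cases "i < k"; simp only: if_True if_False;
          intro measurable_Pair z a b hx hu hd he measurable_const; simp)
    by (simp add: space_pair_measure)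
qed

lemma mpow_Suc: "mpow A (Suc t) = A ** mpow A t"
  by (simp add: mpow_def)

lemma mpow_0: "mpow A 0 = mat 1"
  by (simp add: mpow_def)

lemma run_meas:
  fixes A :: "real^'n^'n" and B :: "real^'m^'n" and L :: "nat \<Rightarrow> real^'n^'m"
    and X0 :: "'w \<Rightarrow> real^'n" and Wn :: "nat \<Rightarrow> 'w \<Rightarrow> real^'n"
    and Tau :: "nat \<Rightarrow> 'w \<Rightarrow> nat" and V :: "nat \<Rightarrow> 'w \<Rightarrow> real"
    and p :: "nat \<Rightarrow> (nat \<Rightarrow> ('n, 'm) infoval) \<Rightarrow> real"
  assumes X0: "X0 \<in> borel_measurable G"
    and W: "\<And>j. j < n \<Longrightarrow> Wn j \<in> borel_measurable G"
    and T: "\<And>j. Tau j \<in> measurable G (count_space UNIV)"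
    and V: "\<And>j. j < n \<Longrightarrow> V j \<in> borel_measurable G"
    and P: "\<And>j. j < n \<Longrightarrow> p j \<in> borel_measurable info_space"
  shows "\<forall>i. (\<lambda>\<omega>. hx (run A B L m0 (X0 \<omega>) (\<lambda>k. Wn k \<omega>) (\<lambda>k. Tau k \<omega>) (\<lambda>k. V k \<omega>) p n) i) \<in> borel_measurable G
     \<and> (\<lambda>\<omega>. hxh (run A B L m0 (X0 \<omega>) (\<lambda>k. Wn k \<omega>) (\<lambda>k. Tau k \<omega>) (\<lambda>k. V k \<omega>) p n) i) \<in> borel_measurable G
     \<and> (\<lambda>\<omega>. hu (run A B L m0 (X0 \<omega>) (\<lambda>k. Wn k \<omega>) (\<lambda>k. Tau k \<omega>) (\<lambda>k. V k \<omega>) p n) i) \<in> borel_measurable G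
     \<and> (\<lambda>\<omega>. hd (run A B L m0 (X0 \<omega>) (\<lambda>k. Wn k \<omega>) (\<lambda>k. Tau k \<omega>) (\<lambda>k. V k \<omega>) p n) i) \<in> measurable G (count_space UNIV)
     \<and> (\<lambda>\<omega>. heta (run A B L m0 (X0 \<omega>) (\<lambda>k. Wn k \<omega>) (\<lambda>k. Tau k \<omega>) (\<lambda>k. V k \<omega>) p n) i) \<in> measurable G (count_space UNIV)"
  using W V P
proof (induction n)
  case 0
  show ?case using X0 by (simp add: hist_init_def)
next
  case (Suc n)
  define h where "h \<omega> = run A B L m0 (X0 \<omega>) (\<lambda>k. Wn k \<omega>) (\<lambda>k. Tau k \<omega>) (\<lambda>k. V k \<omega>) p n" for \<omega>
  have IH: "\<And>i. (\<lambda>\<omega>. hx (h \<omega>) i) \<in> borel_measurable G"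
     "\<And>i. (\<lambda>\<omega>. hxh (h \<omega>) i) \<in> borel_measurable G"
     "\<And>i. (\<lambda>\<omega>. hu (h \<omega>) i) \<in> borel_measurable G"
     "\<And>i. (\<lambda>\<omega>. hd (h \<omega>) i) \<in> measurable G (count_space UNIV)"
     "\<And>i. (\<lambda>\<omega>. heta (h \<omega>) i) \<in> measurable G (count_space UNIV)"
    using Suc.IH Suc.prems unfolding h_def by auto
  have Wn: "Wn n \<in> borel_measurable G" and Vn: "V n \<in> borel_measurable G"
    and Pn: "p n \<in> borel_measurable info_space" using Suc.prems by auto
  note [measurable] = IH Wn Vn
  define u where "u \<omega> = - (L n *v hxh (h \<omega>) n)" for \<omega>
  have u[measurable]: "u \<in> borel_measurable G" unfolding u_def by measurable
  have inf: "(\<lambda>\<omega>. p n (info_of (\<lambda>k. Tau k \<omega>) (h \<omega>) n)) \<in> borel_measurable G"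
    by (rule measurable_compose[OF info_meas[OF T IH(1) IH(3) IH(4) IH(5)] Pn])
  define d where "d \<omega> = (V n \<omega> < p n (info_of (\<lambda>k. Tau k \<omega>) (h \<omega>) n))" for \<omega>
  have dd: "{w \<in> space G. V n w < p n (info_of (\<lambda>k. Tau k w) (h w) n)} \<in> sets G"
    by (rule borel_measurable_less[OF Vn inf])
  have d[measurable]: "d \<in> measurable G (count_space UNIV)" unfolding d_def
    by (rule Measurable.pred_def[THEN iffD2, OF dd])
  have z: "(\<lambda>\<omega>. zeta (\<lambda>k. Tau k \<omega>) n) \<in> measurable G (count_space UNIV)"
    using zeta_meas[OF T] .
  define F where "F a \<omega> = mpow A (a + 1) *v hx (h \<omega>) (n - a)
         + (\<Sum>t\<le>a. mpow A t *v (B *v ((hu (h \<omega>))(n := u \<omega>)) (n - t)))" for a \<omega>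
  have F: "F a \<in> borel_measurable G" for a
  proof -
    have "(\<lambda>\<omega>. ((hu (h \<omega>))(n := u \<omega>)) (n - t)) \<in> borel_measurable G" for t
      by (cases "n - t = n") simp_all
    then show ?thesis unfolding F_def by measurable
  qed
  have xhn: "(\<lambda>\<omega>. F (zeta (\<lambda>k. Tau k \<omega>) n) \<omega>) \<in> borel_measurable G"
    by (rule measurable_compose_countable[OF F z])
  have en: "(\<lambda>\<omega>. enat (zeta (\<lambda>k. Tau k \<omega>) n + 1)) \<in> measurable G (count_space UNIV)"
    by (rule measurable_compose[OF z]) simp
  have en2: "(\<lambda>\<omega>. heta (h \<omega>) n + 1) \<in> measurable G (count_space UNIV)"
    by (rule measurable_compose[OF IH(5)]) simp
  have "(\<lambda>\<omega>. if d \<omega> then F (zeta (\<lambda>k. Tau k \<omega>) n) \<omega> else A *v hxh (h \<omega>) n + B *v u \<omega>) \<in> borel_measurable G"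
    using xhn by measurable
  moreover have "(\<lambda>\<omega>. if d \<omega> then enat (zeta (\<lambda>k. Tau k \<omega>) n + 1) else heta (h \<omega>) n + 1) \<in> measurable G (count_space UNIV)"
    using en en2 by measurable
  ultimately show ?case
    unfolding run.simps h_def[symmetric] sys_step_simps u_def[symmetric] d_def[symmetric] F_def[symmetric]
    by (auto simp: measurable_If)
qed


definition lin_bnd :: "('w \<Rightarrow> real) \<Rightarrow> ('w \<Rightarrow> 'a::real_normed_vector) \<Rightarrow> bool" where
  "lin_bnd Y f \<longleftrightarrow> (\<exists>C. \<forall>\<omega>. norm (f \<omega>) \<le> C * Y \<omega>)"

definition quad_bnd :: "('w \<Rightarrow> real) \<Rightarrow> ('w \<Rightarrow> real) \<Rightarrow> bool" where
  "quad_bnd Y' g \<longleftrightarrow> (\<exists>C. \<forall>\<omega>. \<bar>g \<omega>\<bar> \<le> C * (Y' \<omega>)\<^sup>2)"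

context
  fixes Y :: "'w \<Rightarrow> real"
  assumes Y1: "\<And>\<omega>. 1 \<le> Y \<omega>"
begin

lemma lb_const: "lin_bnd Y (\<lambda>\<omega>. c)"
  unfolding lin_bnd_def
proof (intro exI allI)
  fix \<omega> show "norm c \<le> norm c * Y \<omega>" using Y1[of \<omega>] mult_left_mono[of 1 "Y \<omega>" "norm c"] by simp
qed

lemma lb_self: "(\<And>\<omega>. norm (f \<omega>) \<le> Y \<omega>) \<Longrightarrow> lin_bnd Y f"
  unfolding lin_bnd_def by (intro exI[of _ 1]) simp

lemma lb_add: "lin_bnd Y f \<Longrightarrow> lin_bnd Y g \<Longrightarrow> lin_bnd Y (\<lambda>\<omega>. f \<omega> + g \<omega>)"
  unfolding lin_bnd_def
proof (elim exE)
  fix C D assume C: "\<forall>\<omega>. norm (f \<omega>) \<le> C * Y \<omega>" and D: "\<forall>\<omega>. norm (g \<omega>) \<le> D * Y \<omega>"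
  show "\<exists>E. \<forall>\<omega>. norm (f \<omega> + g \<omega>) \<le> E * Y \<omega>"
  proof (intro exI allI)
    fix \<omega> show "norm (f \<omega> + g \<omega>) \<le> (C + D) * Y \<omega>"
      using C[rule_format, of \<omega>] D[rule_format, of \<omega>] norm_triangle_ineq[of "f \<omega>" "g \<omega>"]
      by (simp add: distrib_right)
  qed
qed

lemma lb_uminus: "lin_bnd Y f \<Longrightarrow> lin_bnd Y (\<lambda>\<omega>. - f \<omega>)"
  unfolding lin_bnd_def by simp

lemma lb_diff: "lin_bnd Y f \<Longrightarrow> lin_bnd Y g \<Longrightarrow> lin_bnd Y (\<lambda>\<omega>. f \<omega> - g \<omega>)"
  using lb_add[of f "\<lambda>\<omega>. - g \<omega>"] lb_uminus[of g] by simp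

lemma lb_mv: "lin_bnd Y f \<Longrightarrow> lin_bnd Y (\<lambda>\<omega>. (P::real^'n^'m) *v f \<omega>)"
  unfolding lin_bnd_def
proof (elim exE)
  fix C assume C: "\<forall>\<omega>. norm (f \<omega>) \<le> C * Y \<omega>"
  obtain K where K: "K > 0" "\<And>x. norm (P *v x) \<le> norm x * K"
    using bounded_linear.pos_bounded[OF matrix_vector_mul_bounded_linear[of P]] by blast
  show "\<exists>E. \<forall>\<omega>. norm (P *v f \<omega>) \<le> E * Y \<omega>"
  proof (intro exI allI)
    fix \<omega>
    have "norm (P *v f \<omega>) \<le> norm (f \<omega>) * K" by (rule K(2))
    also have "\<dots> \<le> (C * Y \<omega>) * K" using C K(1) by (simp add: mult_right_mono)
    finally show "norm (P *v f \<omega>) \<le> (C * K) * Y \<omega>" by (simp add: algebra_simps)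
  qed
qed

lemma lb_if: "lin_bnd Y f \<Longrightarrow> lin_bnd Y g \<Longrightarrow> lin_bnd Y (\<lambda>\<omega>. if c \<omega> then f \<omega> else g \<omega>)"
  unfolding lin_bnd_def
proof (elim exE)
  fix C D assume C: "\<forall>\<omega>. norm (f \<omega>) \<le> C * Y \<omega>" and D: "\<forall>\<omega>. norm (g \<omega>) \<le> D * Y \<omega>"
  show "\<exists>E. \<forall>\<omega>. norm (if c \<omega> then f \<omega> else g \<omega>) \<le> E * Y \<omega>"
  proof (intro exI allI)
    fix \<omega>
    have "C * Y \<omega> \<le> max C D * Y \<omega>" "D * Y \<omega> \<le> max C D * Y \<omega>"
      using Y1[of \<omega>] by (simp_all add: mult_right_mono)
    then show "norm (if c \<omega> then f \<omega> else g \<omega>) \<le> max C D * Y \<omega>"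
    proof (cases "c \<omega>")
      case True
      then show ?thesis using C[rule_format, of \<omega>] \<open>C * Y \<omega> \<le> max C D * Y \<omega>\<close> by simp
    next
      case False
      then show ?thesis using D[rule_format, of \<omega>] \<open>D * Y \<omega> \<le> max C D * Y \<omega>\<close> by simp
    qed
  qed
qed

lemma lb_sum: "finite S \<Longrightarrow> (\<And>t. t \<in> S \<Longrightarrow> lin_bnd Y (f t)) \<Longrightarrow> lin_bnd Y (\<lambda>\<omega>. \<Sum>t\<in>S. f t \<omega>)"
proof (induction S rule: finite_induct)
  case empty then show ?case using lb_const[of 0] by simp
next
  case (insert x F)
  then show ?case using lb_add[of "f x" "\<lambda>\<omega>. \<Sum>t\<in>F. f t \<omega>"] by simp
qed

lemma lb_compose:
  fixes k :: nat
  assumes F: "\<And>a. a \<le> k \<Longrightarrow> lin_bnd Y (F a)" and z: "\<And>\<omega>. z \<omega> \<le> k"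
  shows "lin_bnd Y (\<lambda>\<omega>. F (z \<omega>) \<omega>)"
proof -
  have "\<forall>a\<in>{..k}. \<exists>C. \<forall>\<omega>. norm (F a \<omega>) \<le> C * Y \<omega>" using F unfolding lin_bnd_def by auto
  from bchoice[OF this] obtain C where C0: "\<forall>a\<in>{..k}. \<forall>\<omega>. norm (F a \<omega>) \<le> C a * Y \<omega>" by blast
  have C: "\<And>a \<omega>. a \<le> k \<Longrightarrow> norm (F a \<omega>) \<le> C a * Y \<omega>" using C0 by (meson atMost_iff)
  show ?thesis unfolding lin_bnd_def
  proof (intro exI allI)
    fix \<omega>
    have "C (z \<omega>) \<le> (\<Sum>a\<le>k. \<bar>C a\<bar>)"
    proof -
      have "\<bar>C (z \<omega>)\<bar> \<le> (\<Sum>a\<le>k. \<bar>C a\<bar>)"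
        using z[of \<omega>] by (intro member_le_sum) auto
      then show ?thesis by linarith
    qed
    then have "C (z \<omega>) * Y \<omega> \<le> (\<Sum>a\<le>k. \<bar>C a\<bar>) * Y \<omega>" using Y1[of \<omega>] by (simp add: mult_right_mono)
    then show "norm (F (z \<omega>) \<omega>) \<le> (\<Sum>a\<le>k. \<bar>C a\<bar>) * Y \<omega>" using C[OF z[of \<omega>], of \<omega>] by linarith
  qed
qed

lemma run_bnd:
  fixes A :: "real^'n^'n" and B :: "real^'m^'n" and L :: "nat \<Rightarrow> real^'n^'m"
    and X0 :: "'w \<Rightarrow> real^'n" and Wn :: "nat \<Rightarrow> 'w \<Rightarrow> real^'n"
    and Tau :: "nat \<Rightarrow> 'w \<Rightarrow> nat" and V :: "nat \<Rightarrow> 'w \<Rightarrow> real"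
    and p :: "nat \<Rightarrow> (nat \<Rightarrow> ('n, 'm) infoval) \<Rightarrow> real"
  assumes X0: "\<And>\<omega>. norm (X0 \<omega>) \<le> Y \<omega>"
    and W: "\<And>j \<omega>. j < n \<Longrightarrow> norm (Wn j \<omega>) \<le> Y \<omega>"
  shows "\<forall>i. lin_bnd Y (\<lambda>\<omega>. hx (run A B L m0 (X0 \<omega>) (\<lambda>k. Wn k \<omega>) (\<lambda>k. Tau k \<omega>) (\<lambda>k. V k \<omega>) p n) i)
     \<and> lin_bnd Y (\<lambda>\<omega>. hxh (run A B L m0 (X0 \<omega>) (\<lambda>k. Wn k \<omega>) (\<lambda>k. Tau k \<omega>) (\<lambda>k. V k \<omega>) p n) i)
     \<and> lin_bnd Y (\<lambda>\<omega>. hu (run A B L m0 (X0 \<omega>) (\<lambda>k. Wn k \<omega>) (\<lambda>k. Tau k \<omega>) (\<lambda>k. V k \<omega>) p n) i)"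
  using W
proof (induction n)
  case 0
  have "lin_bnd Y X0" by (rule lb_self[OF X0])
  then show ?case by (simp add: hist_init_def lb_const lb_if)
next
  case (Suc n)
  define h where "h \<omega> = run A B L m0 (X0 \<omega>) (\<lambda>k. Wn k \<omega>) (\<lambda>k. Tau k \<omega>) (\<lambda>k. V k \<omega>) p n" for \<omega>
  have IH: "\<And>i. lin_bnd Y (\<lambda>\<omega>. hx (h \<omega>) i)"
     "\<And>i. lin_bnd Y (\<lambda>\<omega>. hxh (h \<omega>) i)"
     "\<And>i. lin_bnd Y (\<lambda>\<omega>. hu (h \<omega>) i)"
    using Suc.IH Suc.prems unfolding h_def by auto
  have Wn: "lin_bnd Y (Wn n)" using Suc.prems by (intro lb_self) auto
  define u where "u \<omega> = - (L n *v hxh (h \<omega>) n)" for \<omega>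
  have u: "lin_bnd Y u" unfolding u_def by (intro lb_uminus lb_mv IH)
  define d where "d \<omega> = (V n \<omega> < p n (info_of (\<lambda>k. Tau k \<omega>) (h \<omega>) n))" for \<omega>
  define F where "F a \<omega> = mpow A (a + 1) *v hx (h \<omega>) (n - a)
         + (\<Sum>t\<le>a. mpow A t *v (B *v ((hu (h \<omega>))(n := u \<omega>)) (n - t)))" for a \<omega>
  have F: "lin_bnd Y (F a)" for a
  proof -
    have "lin_bnd Y (\<lambda>\<omega>. ((hu (h \<omega>))(n := u \<omega>)) (n - t))" for t
      by (cases "n - t = n") (simp_all add: u IH)
    then show ?thesis unfolding F_def
      by (intro lb_add lb_mv IH lb_sum) auto
  qed
  have xhn: "lin_bnd Y (\<lambda>\<omega>. F (zeta (\<lambda>k. Tau k \<omega>) n) \<omega>)"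
    by (rule lb_compose[OF F zeta_le])
  have "lin_bnd Y (\<lambda>\<omega>. if d \<omega> then F (zeta (\<lambda>k. Tau k \<omega>) n) \<omega> else A *v hxh (h \<omega>) n + B *v u \<omega>)"
    by (intro lb_if xhn lb_add lb_mv IH u)
  moreover have "lin_bnd Y (\<lambda>\<omega>. A *v hx (h \<omega>) n + B *v u \<omega> + Wn n \<omega>)"
    by (intro lb_add lb_mv IH u Wn)
  ultimately show ?case
    unfolding run.simps h_def[symmetric] sys_step_simps u_def[symmetric] d_def[symmetric] F_def[symmetric]
    by (auto intro: lb_if IH u)
qed


lemma qb_bounded: "(\<And>\<omega>. \<bar>g \<omega>\<bar> \<le> c) \<Longrightarrow> quad_bnd Y g"
  unfolding quad_bnd_def
proof (intro exI allI)
  fix \<omega> assume g: "\<And>\<omega>. \<bar>g \<omega>\<bar> \<le> c"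
  have "1 \<le> (Y \<omega>)\<^sup>2" using Y1[of \<omega>] by (simp add: one_le_power)
  moreover have "0 \<le> c" using g[of \<omega>] by linarith
  ultimately have "c \<le> c * (Y \<omega>)\<^sup>2" using mult_left_mono[of 1 "(Y \<omega>)\<^sup>2" c] by simp
  then show "\<bar>g \<omega>\<bar> \<le> c * (Y \<omega>)\<^sup>2" using g[of \<omega>] by linarith
qed

lemma qb_add: "quad_bnd Y f \<Longrightarrow> quad_bnd Y g \<Longrightarrow> quad_bnd Y (\<lambda>\<omega>. f \<omega> + g \<omega>)"
  unfolding quad_bnd_def
proof (elim exE)
  fix C D assume C: "\<forall>\<omega>. \<bar>f \<omega>\<bar> \<le> C * (Y \<omega>)\<^sup>2" and D: "\<forall>\<omega>. \<bar>g \<omega>\<bar> \<le> D * (Y \<omega>)\<^sup>2"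
  show "\<exists>E. \<forall>\<omega>. \<bar>f \<omega> + g \<omega>\<bar> \<le> E * (Y \<omega>)\<^sup>2"
  proof (intro exI allI)
    fix \<omega> show "\<bar>f \<omega> + g \<omega>\<bar> \<le> (C + D) * (Y \<omega>)\<^sup>2"
      using C[rule_format, of \<omega>] D[rule_format, of \<omega>] abs_triangle_ineq[of "f \<omega>" "g \<omega>"]
      by (simp add: distrib_right)
  qed
qed

lemma qb_scale: "quad_bnd Y f \<Longrightarrow> quad_bnd Y (\<lambda>\<omega>. c * f \<omega>)"
  unfolding quad_bnd_def
proof (elim exE)
  fix C assume C: "\<forall>\<omega>. \<bar>f \<omega>\<bar> \<le> C * (Y \<omega>)\<^sup>2"
  show "\<exists>E. \<forall>\<omega>. \<bar>c * f \<omega>\<bar> \<le> E * (Y \<omega>)\<^sup>2"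
  proof (intro exI allI)
    fix \<omega>
    have "\<bar>c\<bar> * \<bar>f \<omega>\<bar> \<le> \<bar>c\<bar> * (C * (Y \<omega>)\<^sup>2)" using C by (simp add: mult_left_mono)
    then show "\<bar>c * f \<omega>\<bar> \<le> (\<bar>c\<bar> * C) * (Y \<omega>)\<^sup>2" by (simp add: abs_mult mult.assoc)
  qed
qed

lemma qb_sum: "finite S \<Longrightarrow> (\<And>t. t \<in> S \<Longrightarrow> quad_bnd Y (f t)) \<Longrightarrow> quad_bnd Y (\<lambda>\<omega>. \<Sum>t\<in>S. f t \<omega>)"
proof (induction S rule: finite_induct)
  case empty then show ?case using qb_bounded[of "\<lambda>_. 0" 0] by simp
next
  case (insert x F)
  then show ?case using qb_add[of "f x" "\<lambda>\<omega>. \<Sum>t\<in>F. f t \<omega>"] by simp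
qed

lemma qb_inner: "lin_bnd Y f \<Longrightarrow> lin_bnd Y g \<Longrightarrow> quad_bnd Y (\<lambda>\<omega>. (f \<omega> :: real^'n) \<bullet> g \<omega>)"
  unfolding quad_bnd_def lin_bnd_def
proof (elim exE)
  fix C D assume C: "\<forall>\<omega>. norm (f \<omega>) \<le> C * Y \<omega>" and D: "\<forall>\<omega>. norm (g \<omega>) \<le> D * Y \<omega>"
  show "\<exists>E. \<forall>\<omega>. \<bar>f \<omega> \<bullet> g \<omega>\<bar> \<le> E * (Y \<omega>)\<^sup>2"
  proof (intro exI allI)
    fix \<omega>
    have "\<bar>f \<omega> \<bullet> g \<omega>\<bar> \<le> norm (f \<omega>) * norm (g \<omega>)" by (rule Cauchy_Schwarz_ineq2)
    also have "\<dots> \<le> (C * Y \<omega>) * (D * Y \<omega>)"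
      using C[rule_format, of \<omega>] D[rule_format, of \<omega>]
      by (intro mult_mono) (auto intro: order_trans[OF norm_ge_zero])
    finally show "\<bar>f \<omega> \<bullet> g \<omega>\<bar> \<le> (C * D) * (Y \<omega>)\<^sup>2" by (simp add: power2_eq_square algebra_simps)
  qed
qed

lemma qb_qf: "lin_bnd Y f \<Longrightarrow> quad_bnd Y (\<lambda>\<omega>. qf P (f \<omega>))"
  unfolding qf_def by (intro qb_inner lb_mv)

lemma qb_integrable:
  assumes "integrable M (\<lambda>\<omega>. (Y \<omega>)\<^sup>2)" "g \<in> borel_measurable M" "quad_bnd Y g"
  shows "integrable M g"
proof -
  obtain C where C: "\<And>\<omega>. \<bar>g \<omega>\<bar> \<le> C * (Y \<omega>)\<^sup>2" using assms(3) unfolding quad_bnd_def by blast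
  show ?thesis
  proof (rule Bochner_Integration.integrable_bound[OF integrable_mult_right[OF assms(1), of C] assms(2)])
    show "AE \<omega> in M. norm (g \<omega>) \<le> norm (C * (Y \<omega>)\<^sup>2)"
      using C by (intro AE_I2) (auto intro: order_trans[OF _ abs_ge_self])
  qed
qed

end


lemma comp_meas[measurable (raw)]:
  "f \<in> borel_measurable G \<Longrightarrow> (\<lambda>\<omega>. (f \<omega> :: real^'n) $ i) \<in> borel_measurable G"
  unfolding cart_eq_inner_axis by (rule borel_measurable_inner) simp_all

lemma normal_sq_integrable: "0 < \<sigma> \<Longrightarrow> integrable lborel (\<lambda>x. normal_density \<mu> \<sigma> x * x\<^sup>2)"
proof -
  assume s: "0 < \<sigma>"
  have "integrable lborel (\<lambda>x. normal_density \<mu> \<sigma> x * (x - \<mu>)^2 + (2*\<mu>) * (normal_density \<mu> \<sigma> x * (x - \<mu>)^1)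
      + \<mu>\<^sup>2 * (normal_density \<mu> \<sigma> x * (x - \<mu>)^0))"
    by (rule Bochner_Integration.integrable_add[OF Bochner_Integration.integrable_add[OF integrable_normal_moment[OF s] integrable_mult_right[OF integrable_normal_moment[OF s]]] integrable_mult_right[OF integrable_normal_moment[OF s]]])
  moreover have "(\<lambda>x. normal_density \<mu> \<sigma> x * (x - \<mu>)^2 + (2*\<mu>) * (normal_density \<mu> \<sigma> x * (x - \<mu>)^1)
      + \<mu>\<^sup>2 * (normal_density \<mu> \<sigma> x * (x - \<mu>)^0)) = (\<lambda>x. normal_density \<mu> \<sigma> x * x\<^sup>2)"
    by (rule ext) (simp add: power2_eq_square algebra_simps)
  ultimately show ?thesis by simp
qed

lemma gauss_sq_integrable:
  fixes X :: "'w \<Rightarrow> real^'n"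
  assumes P: "prob_space M" and G: "gaussian_vec M X mu C" and C: "\<forall>z. 0 \<le> qf C z"
  shows "integrable M (\<lambda>\<omega>. (X \<omega> $ i)\<^sup>2)"
proof -
  interpret prob_space M by (rule P)
  define c :: "real^'n" where "c = axis i 1"
  have Xm[measurable]: "X \<in> borel_measurable M" using G unfolding gaussian_vec_def by blast
  have ci: "c \<bullet> X \<omega> = X \<omega> $ i" for \<omega> unfolding c_def by (simp add: inner_axis')
  show ?thesis
  proof (cases "qf C c = 0")
    case True
    then have "AE \<omega> in M. c \<bullet> X \<omega> = c \<bullet> mu" using G unfolding gaussian_vec_def by blast
    then have "AE \<omega> in M. (X \<omega> $ i)\<^sup>2 = (c \<bullet> mu)\<^sup>2" by (auto simp: ci)
    then have "integrable M (\<lambda>\<omega>. (X \<omega> $ i)\<^sup>2) = integrable M (\<lambda>\<omega>. (c \<bullet> mu)\<^sup>2)"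
      by (intro integrable_cong_AE) auto
    then show ?thesis by simp
  next
    case False
    have "0 \<le> qf C c" using C by blast
    then have pos: "0 < qf C c" using False by linarith
    then have D: "distributed M lborel (\<lambda>\<omega>. c \<bullet> X \<omega>) (\<lambda>x. ennreal (normal_density (c \<bullet> mu) (sqrt (qf C c)) x))"
      using G unfolding gaussian_vec_def by blast
    have "integrable M (\<lambda>\<omega>. (c \<bullet> X \<omega>)\<^sup>2)"
      using distributed_integrable[OF D, of "\<lambda>x. x\<^sup>2"] normal_sq_integrable[of "sqrt (qf C c)"] pos by simp
    then show ?thesis by (simp add: ci)
  qed
qed

lemma gauss_mean0:
  fixes X :: "'w \<Rightarrow> real^'n"
  assumes P: "prob_space M" and G: "gaussian_vec M X 0 C" and C: "\<forall>z. z \<noteq> 0 \<longrightarrow> 0 < qf C z"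
  shows "integrable M (\<lambda>\<omega>. X \<omega> $ i) \<and> (\<integral>\<omega>. X \<omega> $ i \<partial>M) = 0"
proof -
  interpret prob_space M by (rule P)
  define c :: "real^'n" where "c = axis i 1"
  have ci: "c \<bullet> X \<omega> = X \<omega> $ i" for \<omega> unfolding c_def by (simp add: inner_axis')
  have pos: "0 < qf C c" using C unfolding c_def by simp
  then have D: "distributed M lborel (\<lambda>\<omega>. c \<bullet> X \<omega>) (\<lambda>x. ennreal (normal_density (c \<bullet> 0) (sqrt (qf C c)) x))"
    using G unfolding gaussian_vec_def by blast
  have "integrable M (\<lambda>\<omega>. c \<bullet> X \<omega>)"
    using distributed_integrable[OF D, of "\<lambda>x. x"] integrable_normal_moment_nz_1[of "sqrt (qf C c)"] pos by simp
  moreover have "(\<integral>\<omega>. c \<bullet> X \<omega> \<partial>M) = 0"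
    using normal_distributed_expectation[of "sqrt (qf C c)" "\<lambda>\<omega>. c \<bullet> X \<omega>" "c \<bullet> 0"] D pos by simp
  ultimately show ?thesis by (simp add: ci)
qed

lemma rv_events_Int_stable: "Int_stable (rv_events M N X)"
  unfolding Int_stable_def rv_events_def
proof (intro ballI)
  fix a b assume "a \<in> {X -` A \<inter> space M |A. A \<in> sets N}" "b \<in> {X -` A \<inter> space M |A. A \<in> sets N}"
  then obtain A B where "a = X -` A \<inter> space M" "A \<in> sets N" "b = X -` B \<inter> space M" "B \<in> sets N" by blast
  then show "a \<inter> b \<in> {X -` A \<inter> space M |A. A \<in> sets N}"
    by (intro CollectI exI[of _ "A \<inter> B"]) auto
qed

lemma src_events_Int_stable: "Int_stable (src_events M X0 Wn Tau V j)"
  unfolding src_events_def by (cases j) (simp_all add: rv_events_Int_stable)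

lemma src_events_Pow: "src_events M X0 Wn Tau V j \<subseteq> Pow (space M)"
  unfolding src_events_def rv_events_def by (cases j) auto

definition Gk :: "'w measure \<Rightarrow> ('w \<Rightarrow> real^'n) \<Rightarrow> (nat \<Rightarrow> 'w \<Rightarrow> real^'n) \<Rightarrow> (nat \<Rightarrow> 'w \<Rightarrow> nat)
    \<Rightarrow> (nat \<Rightarrow> 'w \<Rightarrow> real) \<Rightarrow> nat \<Rightarrow> 'w measure" where
  "Gk M X0 Wn Tau V k = sigma (space M) (\<Union>j\<in>- {SW k}. src_events M X0 Wn Tau V j)"

lemma Gk_space: "space (Gk M X0 Wn Tau V k) = space M"
  unfolding Gk_def by (rule space_measure_of) (use src_events_Pow in blast)

lemma Gk_sets: "sets (Gk M X0 Wn Tau V k) = sigma_sets (space M) (\<Union>j\<in>- {SW k}. src_events M X0 Wn Tau V j)"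
  unfolding Gk_def by (rule sets_measure_of) (use src_events_Pow in blast)

lemma cross_zero:
  fixes Wn :: "nat \<Rightarrow> 'w \<Rightarrow> real^'n" and f :: "'w \<Rightarrow> real"
  assumes P: "prob_space M"
    and ind: "prob_space.indep_sets M (src_events M X0 Wn Tau V) UNIV"
    and Wm: "Wn k \<in> borel_measurable M"
    and f: "f \<in> borel_measurable (Gk M X0 Wn Tau V k)"
    and fint: "integrable M f"
    and Wi: "integrable M (\<lambda>\<omega>. Wn k \<omega> $ i)" "(\<integral>\<omega>. Wn k \<omega> $ i \<partial>M) = 0"
  shows "(\<integral>\<omega>. Wn k \<omega> $ i * f \<omega> \<partial>M) = 0"
proof -
  interpret prob_space M by (rule P)
  let ?E = "src_events M X0 Wn Tau V"
  define I where "I b = (if b then {SW k} else - {SW k})" for b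
  have "indep_sets (\<lambda>b. sigma_sets (space M) (\<Union>j\<in>I b. ?E j)) UNIV"
  proof (rule indep_sets_collect_sigma)
    have "(\<Union>b\<in>UNIV. I b) = UNIV" unfolding I_def by auto
    then show "indep_sets ?E (\<Union>b\<in>UNIV. I b)" using ind by simp
    show "disjoint_family_on I UNIV" unfolding disjoint_family_on_def I_def by auto
  qed (rule src_events_Int_stable)
  then have ind2: "indep_sets (case_bool (sigma_sets (space M) (?E (SW k))) (sigma_sets (space M) (\<Union>j\<in>- {SW k}. ?E j))) UNIV"
    by (rule indep_sets_cong[THEN iffD1, rotated 2]) (auto simp: I_def split: bool.split)
  have Ev: "?E j \<subseteq> events" for j using ind unfolding indep_sets_def by auto
  have sub1: "sigma_sets (space M) {(\<lambda>\<omega>. Wn k \<omega> $ i) -` A \<inter> space M |A. A \<in> sets borel} \<subseteq> sigma_sets (space M) (?E (SW k))"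
  proof (rule sigma_sets_mono')
    show "{(\<lambda>\<omega>. Wn k \<omega> $ i) -` A \<inter> space M |A. A \<in> sets borel} \<subseteq> ?E (SW k)"
    proof
      fix a assume "a \<in> {(\<lambda>\<omega>. Wn k \<omega> $ i) -` A \<inter> space M |A. A \<in> sets borel}"
      then obtain A where A: "a = (\<lambda>\<omega>. Wn k \<omega> $ i) -` A \<inter> space M" "A \<in> sets borel" by blast
      have "(\<lambda>v. (v::real^'n) $ i) \<in> borel_measurable borel" by (rule comp_meas) simp
      then have "(\<lambda>v. (v::real^'n) $ i) -` A \<inter> space borel \<in> sets borel" using A(2) by (rule measurable_sets)
      moreover have "a = Wn k -` ((\<lambda>v. (v::real^'n) $ i) -` A \<inter> space borel) \<inter> space M" using A by auto
      ultimately show "a \<in> ?E (SW k)" unfolding src_events_def rv_events_def by auto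
    qed
  qed
  have fM: "f -` A \<inter> space M \<in> sigma_sets (space M) (\<Union>j\<in>- {SW k}. ?E j)" if "A \<in> sets borel" for A
    using measurable_sets[OF f that] unfolding Gk_space Gk_sets .
  have sub2: "sigma_sets (space M) {f -` A \<inter> space M |A. A \<in> sets borel} \<subseteq> sigma_sets (space M) (\<Union>j\<in>- {SW k}. ?E j)"
    by (rule sigma_sets_mono) (use fM in blast)
  have F2ev: "sigma_sets (space M) (\<Union>j\<in>- {SW k}. ?E j) \<subseteq> events"
    by (rule sets.sigma_sets_subset) (use Ev in blast)
  have fMM: "f \<in> borel_measurable M"
    by (rule measurableI) (use fM F2ev in auto)
  have "indep_var borel (\<lambda>\<omega>. Wn k \<omega> $ i) borel f"
    unfolding indep_var_eq
  proof (intro conjI)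
    show "random_variable borel (\<lambda>\<omega>. Wn k \<omega> $ i)" using Wm by (rule comp_meas)
    show "random_variable borel f" by (rule fMM)
    show "indep_set (sigma_sets (space M) {(\<lambda>\<omega>. Wn k \<omega> $ i) -` A \<inter> space M |A. A \<in> sets borel})
        (sigma_sets (space M) {f -` A \<inter> space M |A. A \<in> sets borel})"
      unfolding indep_set_def
      by (rule indep_sets_mono_sets[OF ind2]) (use sub1 sub2 in \<open>auto split: bool.split\<close>)
  qed
  then have "(\<integral>\<omega>. Wn k \<omega> $ i * f \<omega> \<partial>M) = (\<integral>\<omega>. Wn k \<omega> $ i \<partial>M) * (\<integral>\<omega>. f \<omega> \<partial>M)"
    by (rule indep_var_lebesgue_integral[OF _ Wi(1) fint])
  then show ?thesis using Wi(2) by simp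
qed

lemma lb_comp: "lin_bnd Y f \<Longrightarrow> lin_bnd Y (\<lambda>\<omega>. (f \<omega> :: real^'n) $ i)"
  unfolding lin_bnd_def using component_le_norm_cart by (metis order_trans real_norm_def)

lemma qb_mult:
  fixes f g :: "'w \<Rightarrow> real"
  assumes "lin_bnd Y f" "lin_bnd Y g"
  shows "quad_bnd Y (\<lambda>\<omega>. f \<omega> * g \<omega>)"
proof -
  obtain C where C: "\<And>\<omega>. norm (f \<omega>) \<le> C * Y \<omega>" using assms(1) unfolding lin_bnd_def by blast
  obtain D where D: "\<And>\<omega>. norm (g \<omega>) \<le> D * Y \<omega>" using assms(2) unfolding lin_bnd_def by blast
  have "\<bar>f \<omega> * g \<omega>\<bar> \<le> (C * D) * (Y \<omega>)\<^sup>2" for \<omega>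
  proof -
    have "\<bar>f \<omega> * g \<omega>\<bar> = norm (f \<omega>) * norm (g \<omega>)" by (simp add: abs_mult)
    also have "\<dots> \<le> (C * Y \<omega>) * (D * Y \<omega>)"
      using C[of \<omega>] D[of \<omega>]
      by (intro mult_mono) (auto intro: order_trans[OF norm_ge_zero])
    finally show ?thesis by (simp add: power2_eq_square algebra_simps)
  qed
  then show ?thesis unfolding quad_bnd_def by blast
qed


definition Ybar :: "nat \<Rightarrow> ('w \<Rightarrow> real^'n) \<Rightarrow> (nat \<Rightarrow> 'w \<Rightarrow> real^'n) \<Rightarrow> 'w \<Rightarrow> real" where
  "Ybar N X0 Wn \<omega> = sqrt (1 + (norm (X0 \<omega>))\<^sup>2 + (\<Sum>j\<le>N. (norm (Wn j \<omega>))\<^sup>2))"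

lemma Ybar_ge1: "1 \<le> Ybar N X0 Wn \<omega>"
proof -
  have "1 \<le> 1 + (norm (X0 \<omega>))\<^sup>2 + (\<Sum>j\<le>N. (norm (Wn j \<omega>))\<^sup>2)" by (simp add: sum_nonneg)
  then show ?thesis unfolding Ybar_def using real_sqrt_le_mono by fastforce
qed

lemma Ybar_sq: "(Ybar N X0 Wn \<omega>)\<^sup>2 = 1 + (norm (X0 \<omega>))\<^sup>2 + (\<Sum>j\<le>N. (norm (Wn j \<omega>))\<^sup>2)"
  unfolding Ybar_def by (simp add: sum_nonneg add_nonneg_nonneg)

lemma Ybar_X0: "norm (X0 \<omega>) \<le> Ybar N X0 Wn \<omega>"
  unfolding Ybar_def by (rule real_le_rsqrt) (simp add: sum_nonneg)

lemma Ybar_W: "j \<le> N \<Longrightarrow> norm (Wn j \<omega>) \<le> Ybar N X0 Wn \<omega>"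
  unfolding Ybar_def
proof (rule real_le_rsqrt)
  assume "j \<le> N"
  then have "(norm (Wn j \<omega>))\<^sup>2 \<le> (\<Sum>j\<le>N. (norm (Wn j \<omega>))\<^sup>2)"
    by (intro member_le_sum) auto
  then show "(norm (Wn j \<omega>))\<^sup>2 \<le> 1 + (norm (X0 \<omega>))\<^sup>2 + (\<Sum>j\<le>N. (norm (Wn j \<omega>))\<^sup>2)"
    using zero_le_power2[of "norm (X0 \<omega>)"] by linarith
qed

lemma norm_sq_sum: "(norm (x :: real^'n))\<^sup>2 = (\<Sum>i\<in>UNIV. (x $ i)\<^sup>2)"
  unfolding power2_norm_eq_inner inner_vec_def by (simp add: power2_eq_square)

context
  fixes A :: "real^'n^'n" and B :: "real^'m^'n" and Q W M0 :: "real^'n^'n" and R :: "real^'m^'m"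
    and m0 :: "real^'n" and N :: nat and lam ell :: real
    and M :: "'w measure" and X0 :: "'w \<Rightarrow> real^'n" and Wn :: "nat \<Rightarrow> 'w \<Rightarrow> real^'n"
    and Tau :: "nat \<Rightarrow> 'w \<Rightarrow> nat" and V :: "nat \<Rightarrow> 'w \<Rightarrow> real"
  assumes P: "prob_space M"
    and lam: "0 < lam" "lam < 1"
    and Qs: "transpose Q = Q" and Qp: "\<forall>z. 0 \<le> qf Q z"
    and Rs: "transpose R = R" and Rp: "\<forall>z. z \<noteq> 0 \<longrightarrow> 0 < qf R z"
    and Wp: "\<forall>z. z \<noteq> 0 \<longrightarrow> 0 < qf W z"
    and M0p: "\<forall>z. 0 \<le> qf M0 z"
    and gX: "gaussian_vec M X0 m0 M0"
    and gW: "\<forall>k. gaussian_vec M (Wn k) 0 W"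
    and Tm: "\<forall>k. Tau k \<in> measurable M (count_space UNIV)"
    and Vm: "\<forall>k. V k \<in> borel_measurable M"
    and ind: "prob_space.indep_sets M (src_events M X0 Wn Tau V) UNIV"
begin

abbreviation "Y \<equiv> Ybar N X0 Wn"

lemma X0m: "X0 \<in> borel_measurable M" using gX unfolding gaussian_vec_def by blast
lemma Wm: "Wn k \<in> borel_measurable M" using gW unfolding gaussian_vec_def by blast

lemma Wnn: "\<forall>z. 0 \<le> qf W z" using Wp by (metis less_eq_real_def qf_def inner_zero_left)

lemma Y_int: "integrable M (\<lambda>\<omega>. (Y \<omega>)\<^sup>2)"
proof -
  interpret prob_space M by (rule P)
  have "integrable M (\<lambda>\<omega>. 1 + (\<Sum>i\<in>UNIV. (X0 \<omega> $ i)\<^sup>2) + (\<Sum>j\<le>N. \<Sum>i\<in>UNIV. (Wn j \<omega> $ i)\<^sup>2))"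
    using gauss_sq_integrable[OF P gX M0p] gauss_sq_integrable[OF P gW[rule_format] Wnn]
    by (intro Bochner_Integration.integrable_add Bochner_Integration.integrable_sum) auto
  then show ?thesis unfolding Ybar_sq norm_sq_sum .
qed

lemma Y1: "1 \<le> Y \<omega>" by (rule Ybar_ge1)

lemma qb_diff: "quad_bnd Y f \<Longrightarrow> quad_bnd Y g \<Longrightarrow> quad_bnd Y (\<lambda>\<omega>. f \<omega> - g \<omega>)"
  using qb_add[where Y=Y, OF Y1, where f=f and g="\<lambda>\<omega>. (-1) * g \<omega>"] qb_scale[where Y=Y and f=g and c="-1", OF Y1] by simp

lemma lb_qb: "lin_bnd Y (f :: 'w \<Rightarrow> real) \<Longrightarrow> quad_bnd Y f"
  using qb_mult[where Y=Y and f=f and g="\<lambda>_. 1"] lb_const[where Y=Y and c="1::real", OF Y1] by simp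

lemma src_meas:
  assumes "rv_events M Nm Xf \<subseteq> src_events M X0 Wn Tau V j" "j \<noteq> SW k" "Xf \<in> measurable M Nm"
  shows "Xf \<in> measurable (Gk M X0 Wn Tau V k) Nm"
proof (rule measurableI)
  fix x assume "x \<in> space (Gk M X0 Wn Tau V k)"
  then show "Xf x \<in> space Nm" unfolding Gk_space by (rule measurable_space[OF assms(3)])
next
  fix A assume "A \<in> sets Nm"
  then have "Xf -` A \<inter> space M \<in> src_events M X0 Wn Tau V j" using assms(1) unfolding rv_events_def by blast
  then have "Xf -` A \<inter> space M \<in> (\<Union>j\<in>- {SW k}. src_events M X0 Wn Tau V j)" using assms(2) by blast
  then show "Xf -` A \<inter> space (Gk M X0 Wn Tau V k) \<in> sets (Gk M X0 Wn Tau V k)"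
    unfolding Gk_space Gk_sets by (rule sigma_sets.Basic)
qed

lemma Gk_X0: "X0 \<in> borel_measurable (Gk M X0 Wn Tau V k)"
  by (rule src_meas[of _ _ SX0]) (auto simp: src_events_def X0m)
lemma Gk_W: "j \<noteq> k \<Longrightarrow> Wn j \<in> borel_measurable (Gk M X0 Wn Tau V k)"
  by (rule src_meas[of _ _ "SW j"]) (auto simp: src_events_def Wm)
lemma Gk_T: "Tau j \<in> measurable (Gk M X0 Wn Tau V k) (count_space UNIV)"
  by (rule src_meas[of _ _ "STau j"]) (auto simp: src_events_def Tm)
lemma Gk_V: "V j \<in> borel_measurable (Gk M X0 Wn Tau V k)"
  by (rule src_meas[of _ _ "SV j"]) (auto simp: src_events_def Vm)

lemmas Ylb_const = lb_const[where Y=Y, OF Y1]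
lemmas Ylb_self = lb_self[where Y=Y, OF Y1]
lemmas Ylb_add = lb_add[where Y=Y, OF Y1]
lemmas Ylb_diff = lb_diff[where Y=Y, OF Y1]
lemmas Ylb_uminus = lb_uminus[where Y=Y, OF Y1]
lemmas Ylb_mv = lb_mv[where Y=Y, OF Y1]
lemmas Yqb_bounded = qb_bounded[where Y=Y, OF Y1]
lemmas Yqb_add = qb_add[where Y=Y, OF Y1]
lemmas Yqb_scale = qb_scale[where Y=Y, OF Y1]
lemmas Yqb_sum = qb_sum[where Y=Y, OF Y1]
lemmas Yqb_inner = qb_inner[where Y=Y, OF Y1]
lemmas Yqb_qf = qb_qf[where Y=Y, OF Y1]
lemmas Yqb_int = qb_integrable[where Y=Y, OF Y1 Y_int]

lemma of_bool_meas[measurable (raw)]: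
  "(b :: 'a \<Rightarrow> bool) \<in> measurable G (count_space UNIV) \<Longrightarrow> (\<lambda>\<omega>. of_bool (b \<omega>) :: real) \<in> borel_measurable G"
  by (rule measurable_compose[of b G "count_space UNIV"]) simp_all

lemma qf_meas[measurable (raw)]:
  "f \<in> borel_measurable G \<Longrightarrow> (\<lambda>\<omega>. qf P (f \<omega>)) \<in> borel_measurable G"
  unfolding qf_def by (rule borel_measurable_inner, assumption, rule mv_meas, assumption)

lemma mvb[measurable]: "(\<lambda>x. (P::real^'a^'b) *v x) \<in> borel_measurable borel"
  by (rule borel_measurable_continuous_onI, rule linear_continuous_on, simp)

lemma coef_eq: "lam \<noteq> 0 \<Longrightarrow> (K::real) \<noteq> 0 \<Longrightarrow> (1 - lam) / K * (ell * d) = lam / K * (ell * (1 - lam) / lam * d)"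
  by (simp add: field_simps)

lemma key:
  fixes p :: "nat \<Rightarrow> (nat \<Rightarrow> ('n, 'm) infoval) \<Rightarrow> real"
  assumes padm: "p \<in> admissible N"
  shows "Phi M A B Q R N lam ell m0 X0 Wn Tau V p = lam / real (N + 1) * Psi M A B Q R N lam ell m0 X0 Wn Tau V p
     + lam / real (N + 1) * (\<integral>\<omega>. qf (riccS A B Q R N 0) (X0 \<omega>) - qf Q (X0 \<omega>)
           + (\<Sum>k\<le>N. qf (riccS A B Q R N (Suc k)) (Wn k \<omega>)) \<partial>M)"
proof -
  interpret prob_space M by (rule P)
  define L where "L = gainL A B Q R N"
  define S where "S = riccS A B Q R N"
  define RR where "RR n \<omega> = run A B L m0 (X0 \<omega>) (\<lambda>k. Wn k \<omega>) (\<lambda>k. Tau k \<omega>) (\<lambda>k. V k \<omega>) p n" for n \<omega>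
  define h where "h \<omega> = RR (Suc N) \<omega>" for \<omega>
  have traj: "traj A B Q R N m0 X0 Wn Tau V p \<omega> = h \<omega>" for \<omega>
    by (simp add: traj_def h_def RR_def L_def)
  have pm: "\<And>j. j < Suc N \<Longrightarrow> p j \<in> borel_measurable info_space"
    using padm unfolding admissible_def by auto
  have meas: "\<forall>i. (\<lambda>\<omega>. hx (RR (Suc N) \<omega>) i) \<in> borel_measurable M
     \<and> (\<lambda>\<omega>. hxh (RR (Suc N) \<omega>) i) \<in> borel_measurable M
     \<and> (\<lambda>\<omega>. hu (RR (Suc N) \<omega>) i) \<in> borel_measurable M
     \<and> (\<lambda>\<omega>. hd (RR (Suc N) \<omega>) i) \<in> measurable M (count_space UNIV)
     \<and> (\<lambda>\<omega>. heta (RR (Suc N) \<omega>) i) \<in> measurable M (count_space UNIV)"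
    unfolding RR_def
    by (rule run_meas[where G=M and n="Suc N" and Wn=Wn and Tau=Tau and V=V and p=p and A=A and B=B and L=L,
          OF X0m Wm Tm[rule_format] Vm[rule_format] pm])
  have hxm[measurable]: "(\<lambda>\<omega>. hx (h \<omega>) i) \<in> borel_measurable M"
    and hxhm[measurable]: "(\<lambda>\<omega>. hxh (h \<omega>) i) \<in> borel_measurable M"
    and hum[measurable]: "(\<lambda>\<omega>. hu (h \<omega>) i) \<in> borel_measurable M"
    and hdm[measurable]: "(\<lambda>\<omega>. hd (h \<omega>) i) \<in> measurable M (count_space UNIV)" for i
    using meas unfolding h_def by auto
  have bnd: "\<forall>i. lin_bnd Y (\<lambda>\<omega>. hx (RR (Suc N) \<omega>) i)
     \<and> lin_bnd Y (\<lambda>\<omega>. hxh (RR (Suc N) \<omega>) i)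
     \<and> lin_bnd Y (\<lambda>\<omega>. hu (RR (Suc N) \<omega>) i)"
    unfolding RR_def
    by (rule run_bnd[where Y=Y and n="Suc N" and Wn=Wn and Tau=Tau and V=V and p=p and A=A and B=B and L=L,
          OF Y1 Ybar_X0 Ybar_W]) simp
  have hxb: "lin_bnd Y (\<lambda>\<omega>. hx (h \<omega>) i)"
    and hxhb: "lin_bnd Y (\<lambda>\<omega>. hxh (h \<omega>) i)"
    and hub: "lin_bnd Y (\<lambda>\<omega>. hu (h \<omega>) i)" for i
    using bnd unfolding h_def by auto
  define \<theta> where "\<theta> = ell * (1 - lam) / lam"
  define c where "c = lam / real (N + 1)"
  define dsum where "dsum \<omega> = (\<Sum>k\<le>N. of_bool (hd (h \<omega>) k) :: real)" for \<omega>
  define gsum where "gsum \<omega> = (\<Sum>k\<le>N. qf (Gam A B Q R N k) (hx (h \<omega>) k - hxh (h \<omega>) k))" for \<omega>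
  define g0 where "g0 \<omega> = qf (S 0) (X0 \<omega>) - qf Q (X0 \<omega>) + (\<Sum>k\<le>N. qf (S (Suc k)) (Wn k \<omega>))" for \<omega>
  define cr where "cr k \<omega> = Wn k \<omega> \<bullet> (S (Suc k) *v (A *v hx (h \<omega>) k + B *v hu (h \<omega>) k))" for k \<omega>
  have Psi_eq: "Psi M A B Q R N lam ell m0 X0 Wn Tau V p = (\<integral>\<omega>. \<theta> * dsum \<omega> + gsum \<omega> \<partial>M)"
    unfolding Psi_def Let_def traj \<theta>_def[symmetric] dsum_def gsum_def
    by (simp add: sum.distrib sum_distrib_left mult.commute)
  have pw: "(let h = traj A B Q R N m0 X0 Wn Tau V p \<omega> in
             (1 - lam) / real (N + 1) * (\<Sum>k\<le>N. ell * of_bool (hd h k))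
           + lam / real (N + 1) * (\<Sum>k\<le>N. qf Q (hx h (Suc k)) + qf R (hu h k)))
       = c * (\<theta> * dsum \<omega> + gsum \<omega>) + c * g0 \<omega> + c * (\<Sum>k\<le>N. 2 * cr k \<omega>)" for \<omega>
  proof -
    have hh: "h \<omega> = run A B (gainL A B Q R N) m0 (X0 \<omega>) (\<lambda>k. Wn k \<omega>) (\<lambda>k. Tau k \<omega>) (\<lambda>k. V k \<omega>) p (Suc N)"
      by (simp add: h_def RR_def L_def)
    have pi: "(\<Sum>k\<le>N. qf Q (hx (h \<omega>) (Suc k)) + qf R (hu (h \<omega>) k)) = g0 \<omega> + gsum \<omega> + (\<Sum>k\<le>N. 2 * cr k \<omega>)"
      unfolding path_identity[OF Qs Qp Rs Rp hh] g0_def gsum_def cr_def S_def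
      by (simp add: sum.distrib)
    have ds: "(\<Sum>k\<le>N. ell * of_bool (hd (h \<omega>) k)) = ell * dsum \<omega>"
      unfolding dsum_def by (simp add: sum_distrib_left)
    have "(1 - lam) / real (N + 1) * (ell * dsum \<omega>) = c * (\<theta> * dsum \<omega>)"
      unfolding c_def \<theta>_def using lam by (intro coef_eq) auto
    then show ?thesis unfolding Let_def traj pi ds c_def[symmetric] by (simp add: algebra_simps)
  qed
  note [measurable] = X0m Wm
  have dsm[measurable]: "dsum \<in> borel_measurable M" unfolding dsum_def by measurable
  have gsm[measurable]: "gsum \<in> borel_measurable M" unfolding gsum_def by measurable
  have g0m[measurable]: "g0 \<in> borel_measurable M" unfolding g0_def by measurable
  have crm[measurable]: "cr k \<in> borel_measurable M" for k unfolding cr_def by measurable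
  have dsb: "\<bar>dsum \<omega>\<bar> \<le> real (N + 1)" for \<omega>
  proof -
    have "0 \<le> dsum \<omega>" unfolding dsum_def by (simp add: sum_nonneg)
    moreover have "dsum \<omega> \<le> (\<Sum>k\<le>N. 1)" unfolding dsum_def by (intro sum_mono) simp
    ultimately show ?thesis by simp
  qed
  have PsiI_int: "integrable M (\<lambda>\<omega>. \<theta> * dsum \<omega> + gsum \<omega>)"
  proof (rule Yqb_int)
    show "(\<lambda>\<omega>. \<theta> * dsum \<omega> + gsum \<omega>) \<in> borel_measurable M" by measurable
    show "quad_bnd Y (\<lambda>\<omega>. \<theta> * dsum \<omega> + gsum \<omega>)"
      unfolding gsum_def
      by (intro Yqb_add Yqb_scale Yqb_bounded[OF dsb] Yqb_sum Yqb_qf Ylb_diff hxb hxhb) auto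
  qed
  have g0_int: "integrable M g0"
  proof (rule Yqb_int)
    show "g0 \<in> borel_measurable M" by measurable
    show "quad_bnd Y g0"
      unfolding g0_def
      by (intro Yqb_add qb_diff Yqb_qf Ylb_self Yqb_sum Ybar_X0 Ybar_W) auto
  qed
  have cr_int: "integrable M (cr k)" if "k \<le> N" for k
  proof (rule Yqb_int)
    show "cr k \<in> borel_measurable M" by measurable
    show "quad_bnd Y (cr k)"
      unfolding cr_def
      by (intro Yqb_inner Ylb_self Ybar_W Ylb_mv Ylb_add hxb hub that)
  qed
  have cr_zero: "(\<integral>\<omega>. cr k \<omega> \<partial>M) = 0" if k: "k \<le> N" for k
  proof -
    define y where "y \<omega> = S (Suc k) *v (A *v hx (h \<omega>) k + B *v hu (h \<omega>) k)" for \<omega>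
    have ym[measurable]: "y \<in> borel_measurable M" unfolding y_def by measurable
    have yb: "lin_bnd Y y" unfolding y_def by (intro Ylb_mv Ylb_add hxb hub)
    have y_eq: "y = (\<lambda>\<omega>. S (Suc k) *v (A *v hx (RR k \<omega>) k + B *v (- (L k *v hxh (RR k \<omega>) k))))"
    proof
      fix \<omega>
      have hh: "h \<omega> = run A B L m0 (X0 \<omega>) (\<lambda>k. Wn k \<omega>) (\<lambda>k. Tau k \<omega>) (\<lambda>k. V k \<omega>) p (Suc N)"
        by (simp add: h_def RR_def)
      have fr: "hx (h \<omega>) k = hx (RR k \<omega>) k" "hxh (h \<omega>) k = hxh (RR k \<omega>) k"
        using run_frozen[of k "Suc N" A B L m0 "X0 \<omega>" "\<lambda>k. Wn k \<omega>" "\<lambda>k. Tau k \<omega>" "\<lambda>k. V k \<omega>" p] k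
        unfolding hh RR_def by auto
      have "hu (h \<omega>) k = - (L k *v hxh (h \<omega>) k)" using run_rel(2)[OF k hh] .
      then show "y \<omega> = S (Suc k) *v (A *v hx (RR k \<omega>) k + B *v (- (L k *v hxh (RR k \<omega>) k)))"
        unfolding y_def fr by simp
    qed
    have pk: "\<And>j. j < k \<Longrightarrow> p j \<in> borel_measurable info_space" using pm k by simp
    have Wk: "\<And>j. j < k \<Longrightarrow> Wn j \<in> borel_measurable (Gk M X0 Wn Tau V k)" by (rule Gk_W) simp
    have meask: "\<forall>i. (\<lambda>\<omega>. hx (RR k \<omega>) i) \<in> borel_measurable (Gk M X0 Wn Tau V k)
       \<and> (\<lambda>\<omega>. hxh (RR k \<omega>) i) \<in> borel_measurable (Gk M X0 Wn Tau V k)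
       \<and> (\<lambda>\<omega>. hu (RR k \<omega>) i) \<in> borel_measurable (Gk M X0 Wn Tau V k)
       \<and> (\<lambda>\<omega>. hd (RR k \<omega>) i) \<in> measurable (Gk M X0 Wn Tau V k) (count_space UNIV)
       \<and> (\<lambda>\<omega>. heta (RR k \<omega>) i) \<in> measurable (Gk M X0 Wn Tau V k) (count_space UNIV)"
      unfolding RR_def
      by (rule run_meas[where G="Gk M X0 Wn Tau V k" and n=k and Wn=Wn and Tau=Tau and V=V and p=p and A=A and B=B and L=L,
            OF Gk_X0 Wk Gk_T Gk_V pk])
    have [measurable]: "(\<lambda>\<omega>. hx (RR k \<omega>) k) \<in> borel_measurable (Gk M X0 Wn Tau V k)"
      "(\<lambda>\<omega>. hxh (RR k \<omega>) k) \<in> borel_measurable (Gk M X0 Wn Tau V k)"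
      using meask by auto
    have yGk: "(\<lambda>\<omega>. y \<omega> $ i) \<in> borel_measurable (Gk M X0 Wn Tau V k)" for i
      unfolding y_eq by measurable
    have yint: "integrable M (\<lambda>\<omega>. y \<omega> $ i)" for i
      by (rule Yqb_int) (measurable, intro lb_qb lb_comp yb)
    have Wi: "integrable M (\<lambda>\<omega>. Wn k \<omega> $ i) \<and> (\<integral>\<omega>. Wn k \<omega> $ i \<partial>M) = 0" for i
      by (rule gauss_mean0[OF P gW[rule_format] Wp])
    have z: "(\<integral>\<omega>. Wn k \<omega> $ i * y \<omega> $ i \<partial>M) = 0" for i
      using cross_zero[OF P ind Wm yGk yint] Wi by blast
    have pint: "integrable M (\<lambda>\<omega>. Wn k \<omega> $ i * y \<omega> $ i)" for i
      by (rule Yqb_int) (measurable, intro qb_mult lb_comp yb Ylb_self Ybar_W k)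
    have "cr k = (\<lambda>\<omega>. \<Sum>i\<in>UNIV. Wn k \<omega> $ i * y \<omega> $ i)"
      unfolding cr_def y_def inner_vec_def by simp
    then have "(\<integral>\<omega>. cr k \<omega> \<partial>M) = (\<Sum>i\<in>UNIV. (\<integral>\<omega>. Wn k \<omega> $ i * y \<omega> $ i \<partial>M))"
      using Bochner_Integration.integral_sum[of UNIV M "\<lambda>i \<omega>. Wn k \<omega> $ i * y \<omega> $ i", OF pint] by simp
    also have "\<dots> = 0" using z by simp
    finally show ?thesis .
  qed
  have CR_int: "integrable M (\<lambda>\<omega>. \<Sum>k\<le>N. 2 * cr k \<omega>)"
    using cr_int by (intro Bochner_Integration.integrable_sum integrable_mult_right) auto
  have CR_zero: "(\<integral>\<omega>. (\<Sum>k\<le>N. 2 * cr k \<omega>) \<partial>M) = 0"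
    using cr_int cr_zero by (subst Bochner_Integration.integral_sum) auto
  have "Phi M A B Q R N lam ell m0 X0 Wn Tau V p
      = (\<integral>\<omega>. c * (\<theta> * dsum \<omega> + gsum \<omega>) + c * g0 \<omega> + c * (\<Sum>k\<le>N. 2 * cr k \<omega>) \<partial>M)"
    unfolding Phi_def pw ..
  also have "\<dots> = c * (\<integral>\<omega>. \<theta> * dsum \<omega> + gsum \<omega> \<partial>M) + c * (\<integral>\<omega>. g0 \<omega> \<partial>M)
      + c * (\<integral>\<omega>. (\<Sum>k\<le>N. 2 * cr k \<omega>) \<partial>M)"
    using PsiI_int g0_int CR_int by simp
  finally show ?thesis
    unfolding CR_zero Psi_eq c_def g0_def S_def by simp
qed

end

theorem lemma7:
  fixes A :: "real^'n^'n" and B :: "real^'m^'n" and Q W M0 :: "real^'n^'n" and R :: "real^'m^'m"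
    and m0 :: "real^'n" and N :: nat and lam ell :: real
    and M :: "'w measure" and X0 :: "'w \<Rightarrow> real^'n" and Wn :: "nat \<Rightarrow> 'w \<Rightarrow> real^'n"
    and Tau :: "nat \<Rightarrow> 'w \<Rightarrow> nat" and V :: "nat \<Rightarrow> 'w \<Rightarrow> real"
  assumes "prob_space M"
    and "0 < lam" and "lam < 1"
    and "transpose Q = Q" and "\<forall>z. 0 \<le> qf Q z"
    and "transpose R = R" and "\<forall>z. z \<noteq> 0 \<longrightarrow> 0 < qf R z"
    and "transpose W = W" and "\<forall>z. z \<noteq> 0 \<longrightarrow> 0 < qf W z"
    and "transpose M0 = M0" and "\<forall>z. 0 \<le> qf M0 z"
    and "gaussian_vec M X0 m0 M0"
    and "\<forall>k. gaussian_vec M (Wn k) 0 W"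
    and "\<forall>k. Tau k \<in> measurable M (count_space UNIV)"
    and "AE \<omega> in M. Tau 0 \<omega> = 0"
    and "\<forall>k. V k \<in> borel_measurable M \<and> distr M borel (V k) = uniform_measure lborel {0..1}"
    and "prob_space.indep_sets M (src_events M X0 Wn Tau V) UNIV"
  shows "\<forall>p \<in> (admissible N :: (nat \<Rightarrow> (nat \<Rightarrow> ('n, 'm) infoval) \<Rightarrow> real) set).
           (\<forall>q \<in> admissible N. Psi M A B Q R N lam ell m0 X0 Wn Tau V p \<le> Psi M A B Q R N lam ell m0 X0 Wn Tau V q)
       \<longleftrightarrow> (\<forall>q \<in> admissible N. Phi M A B Q R N lam ell m0 X0 Wn Tau V p \<le> Phi M A B Q R N lam ell m0 X0 Wn Tau V q)"
proof -
  let ?K = "\<lambda>p. lam / real (N + 1)"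
  have Vm: "\<forall>k. V k \<in> borel_measurable M" using assms(16) by blast
  note key' = key[OF assms(1,2,3,4,5,6,7,9,11,12,13,14) Vm assms(17)]
  define K where "K = (\<integral>\<omega>. qf (riccS A B Q R N 0) (X0 \<omega>) - qf Q (X0 \<omega>)
           + (\<Sum>k\<le>N. qf (riccS A B Q R N (Suc k)) (Wn k \<omega>)) \<partial>M)"
  define c where "c = lam / real (N + 1)"
  have c: "0 < c" unfolding c_def using assms(2) by simp
  have eq: "Phi M A B Q R N lam ell m0 X0 Wn Tau V p = c * Psi M A B Q R N lam ell m0 X0 Wn Tau V p + c * K"
    if "p \<in> admissible N" for p :: "nat \<Rightarrow> (nat \<Rightarrow> ('n, 'm) infoval) \<Rightarrow> real"
    using key'[OF that] unfolding K_def c_def by simp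
  show ?thesis
  proof (intro ballI)
    fix p :: "nat \<Rightarrow> (nat \<Rightarrow> ('n, 'm) infoval) \<Rightarrow> real"
    assume p: "p \<in> admissible N"
    have "Psi M A B Q R N lam ell m0 X0 Wn Tau V p \<le> Psi M A B Q R N lam ell m0 X0 Wn Tau V q
      \<longleftrightarrow> Phi M A B Q R N lam ell m0 X0 Wn Tau V p \<le> Phi M A B Q R N lam ell m0 X0 Wn Tau V q"
      if q: "q \<in> admissible N" for q
      unfolding eq[OF p] eq[OF q] using c by simp
    then show "(\<forall>q\<in>admissible N. Psi M A B Q R N lam ell m0 X0 Wn Tau V p \<le> Psi M A B Q R N lam ell m0 X0 Wn Tau V q) =
         (\<forall>q\<in>admissible N. Phi M A B Q R N lam ell m0 X0 Wn Tau V p \<le> Phi M A B Q R N lam ell m0 X0 Wn Tau V q)"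
      by blast
  qed
qed


end
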